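(* Let $1\le p<\infty$. Let $\boldsymbol{u}=(u_k)_{k\ge0}$ be an admissible sequence of polynomials in $\ell_p$ such that there exist $C>0$ and $0<\tau<1$ with $\|u_k\|_p\le C\tau^k$ for all $k\in\mathbb{N}$. Let $X$ be a complex random variable whose support is the whole complex plane and which satisfies: for some $\beta>0$, $\limsup_{r\to\infty}\big((\log r)^{1+\beta}\,\mathbb{P}(|X|\ge r)\big)<+\infty$. Let $(X_k)_{k\ge0}$ be a sequence of independent copies of $X$. Then, almost surely, the vector $v=\sum_{k\ge0}X_ku_k$ belongs to $E_p[\boldsymbol{u}]\subset\ell_p$. Moreover, for every $h\in c_{00}$ and every $\eta>0$, almost surely there exists a (realization-dependent) set $A\subseteq\mathbb{N}$ whose natural density exists and is positive such that $\|T_n(B[\boldsymbol{u}]^n)(v)-h\|_p<\eta$ for all $n\in A$.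
   Context: $\ell_p$ is the Banach space of complex sequences $x=(x_n)_{n\ge0}$ with $\|x\|_p=(\sum|x_n|^p)^{1/p}<\infty$, with unit vectors $(e_n)_{n\ge0}$; $c_{00}$ is the subspace of finitely supported sequences ("polynomials"); for nonzero $x\in c_{00}$, $\deg(x)=\max\{n: x_n\ne0\}$. A sequence $(u_k)_{k\ge0}$ in $c_{00}$ is admissible if $u_0=e_0$, $\deg(u_k)=k$ for $k\ge1$, and $\sum_k\|u_k\|_p<\infty$. $E_p[\boldsymbol{u}]=\{\sum_k x_ku_k: \sum_k|x_k|\|u_k\|_p<\infty\}$. $B[\boldsymbol{u}]$ is the operator on $E_p[\boldsymbol{u}]$ with $B[\boldsymbol{u}]u_0=0$, $B[\boldsymbol{u}]u_k=u_{k-1}$ ($k\ge1$). $T_n(B[\boldsymbol{u}]^n):E_p[\boldsymbol{u}]\to\ell_p$ is defined by $T_n(B[\boldsymbol{u}]^n)(\sum_{k\ge0}X_ku_k)=\sum_{k=0}^nX_{k+n}u_k$. The support of $X$ is the whole plane means $\mathbb{P}(X\in U)>0$ for every nonempty open $U\subset\mathbb{C}$. Natural density of $A\subseteq\mathbb{N}$: $\lim_n\#(A\cap[1,n])/n$. *)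

theory Defs
  imports "HOL-Probability.Probability"
begin

definition lp_norm :: "real \<Rightarrow> (nat \<Rightarrow> complex) \<Rightarrow> real" where
  "lp_norm p x = (\<Sum>n. norm (x n) powr p) powr (1 / p)"

definition in_lp :: "real \<Rightarrow> (nat \<Rightarrow> complex) \<Rightarrow> bool" where
  "in_lp p x \<longleftrightarrow> summable (\<lambda>n. norm (x n) powr p)"

definition unit_vec :: "nat \<Rightarrow> nat \<Rightarrow> complex" where
  "unit_vec k = (\<lambda>n. if n = k then 1 else 0)"

definition c00 :: "(nat \<Rightarrow> complex) \<Rightarrow> bool" where
  "c00 x \<longleftrightarrow> finite {n. x n \<noteq> 0}"

definition deg :: "(nat \<Rightarrow> complex) \<Rightarrow> nat" where
  "deg x = Max {n. x n \<noteq> 0}"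

definition admissible :: "real \<Rightarrow> (nat \<Rightarrow> nat \<Rightarrow> complex) \<Rightarrow> bool" where
  "admissible p u \<longleftrightarrow>
     (\<forall>k. c00 (u k)) \<and> u 0 = unit_vec 0 \<and>
     (\<forall>k\<ge>1. u k \<noteq> (\<lambda>_. 0) \<and> deg (u k) = k) \<and>
     summable (\<lambda>k. lp_norm p (u k))"

definition series_vec :: "(nat \<Rightarrow> nat \<Rightarrow> complex) \<Rightarrow> (nat \<Rightarrow> complex) \<Rightarrow> nat \<Rightarrow> complex" where
  "series_vec u x = (\<lambda>m. \<Sum>k. x k * u k m)"

definition Ep :: "real \<Rightarrow> (nat \<Rightarrow> nat \<Rightarrow> complex) \<Rightarrow> (nat \<Rightarrow> complex) set" where
  "Ep p u = {series_vec u x | x. summable (\<lambda>k. norm (x k) * lp_norm p (u k))}"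

text \<open>T_n(B[u]^n) applied to the vector with coefficient sequence x:
  sum_{k=0}^n x_{k+n} u_k.\<close>
definition Tn :: "(nat \<Rightarrow> nat \<Rightarrow> complex) \<Rightarrow> nat \<Rightarrow> (nat \<Rightarrow> complex) \<Rightarrow> nat \<Rightarrow> complex" where
  "Tn u n x = (\<lambda>m. \<Sum>k\<le>n. x (k + n) * u k m)"

definition has_pos_density :: "nat set \<Rightarrow> bool" where
  "has_pos_density A \<longleftrightarrow>
     (\<exists>d>0. (\<lambda>n. real (card (A \<inter> {1..n})) / real n) \<longlonglongrightarrow> d)"

end

theory Submission
  imports Defs
begin

lemma powr_conv0:
  fixes u v t p :: real
  assumes p: "1 \<le> p" and u: "0 \<le> u" and v: "0 \<le> v" and t: "0 \<le> t" "t \<le> 1"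
  shows "((1 - t) * u + t * v) powr p \<le> (1 - t) * u powr p + t * v powr p"
proof (cases "u = 0 \<or> v = 0")
  case False
  then have "u > 0" "v > 0" using u v by auto
  from convex_onD[OF powr_convex[OF p], of t u v] this t show ?thesis by simp
next
  case True
  have key: "(s * w) powr p \<le> s * w powr p" if "0 \<le> s" "s \<le> 1" "0 \<le> w" for s w :: real
  proof -
    have "(s * w) powr p = s powr p * w powr p" using that by (simp add: powr_mult)
    also have "s powr p \<le> s"
    proof (cases "s = 0")
      case False
      then have "s powr p \<le> s powr 1" using that p by (intro powr_mono') auto
      then show ?thesis using that by simp
    qed simp
    then have "s powr p * w powr p \<le> s * w powr p" by (intro mult_right_mono) auto
    finally show ?thesis .
  qed
  from True show ?thesis
  proof
    assume "u = 0"
    then show ?thesis using key[of t v] t v p by simp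
  next
    assume "v = 0"
    then show ?thesis using key[of "1-t" u] t u p by simp
  qed
qed

lemma lp_norm_nonneg: "0 \<le> lp_norm p x"
  unfolding lp_norm_def by simp

lemma lp_norm_pow:
  assumes "1 \<le> p" "in_lp p x"
  shows "lp_norm p x powr p = (\<Sum>n. norm (x n) powr p)"
proof -
  have "0 \<le> (\<Sum>n. norm (x n) powr p)"
    using assms(2) unfolding in_lp_def by (auto intro!: suminf_nonneg)
  then show ?thesis using assms unfolding lp_norm_def by (simp add: powr_powr)
qed

lemma lp_c00: "c00 x \<Longrightarrow> in_lp p x"
  unfolding c00_def in_lp_def by (rule summable_finite[of "{n. x n \<noteq> 0}"]) auto

lemma lp_zero:
  assumes "1 \<le> p" "in_lp p x" "lp_norm p x = 0"
  shows "x n = 0"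
proof -
  have "(\<Sum>n. norm (x n) powr p) = 0" using lp_norm_pow[OF assms(1,2)] assms(3) assms(1) by simp
  then have "\<forall>n. norm (x n) powr p = 0"
    using assms(2) unfolding in_lp_def by (subst (asm) suminf_eq_zero_iff) auto
  then show ?thesis by simp
qed

lemma lp_scale:
  assumes p: "1 \<le> p" and x: "in_lp p x"
  shows "in_lp p (\<lambda>m. a * x m) \<and> lp_norm p (\<lambda>m. a * x m) = norm a * lp_norm p x"
proof -
  have eq: "norm (a * x m) powr p = norm a powr p * norm (x m) powr p" for m
    by (simp add: norm_mult powr_mult)
  have s: "summable (\<lambda>m. norm (x m) powr p)" using x unfolding in_lp_def .
  have 1: "in_lp p (\<lambda>m. a * x m)" unfolding in_lp_def eq by (intro summable_mult s)
  have "lp_norm p (\<lambda>m. a * x m) = (norm a powr p * (\<Sum>m. norm (x m) powr p)) powr (1/p)"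
    unfolding lp_norm_def eq suminf_mult[OF s] ..
  also have "\<dots> = (norm a powr p) powr (1/p) * (\<Sum>m. norm (x m) powr p) powr (1/p)"
    by (intro powr_mult; auto intro!: suminf_nonneg s)
  also have "\<dots> = norm a * lp_norm p x" using p unfolding lp_norm_def by (simp add: powr_powr)
  finally show ?thesis using 1 by simp
qed

lemma lp_triangle:
  assumes p: "1 \<le> p" and x: "in_lp p x" and y: "in_lp p y"
  shows "in_lp p (\<lambda>m. x m + y m) \<and> lp_norm p (\<lambda>m. x m + y m) \<le> lp_norm p x + lp_norm p y"
proof -
  define a where "a = lp_norm p x"
  define b where "b = lp_norm p y"
  have sx: "summable (\<lambda>m. norm (x m) powr p)" using x unfolding in_lp_def .
  have sy: "summable (\<lambda>m. norm (y m) powr p)" using y unfolding in_lp_def .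
  show ?thesis
  proof (cases "a = 0 \<or> b = 0")
    case True
    then show ?thesis
    proof
      assume "a = 0"
      then have "x m = 0" for m using lp_zero[OF p x] unfolding a_def by blast
      then show ?thesis using y lp_norm_nonneg[of p x] by simp
    next
      assume "b = 0"
      then have "y m = 0" for m using lp_zero[OF p y] unfolding b_def by blast
      then show ?thesis using x lp_norm_nonneg[of p y] by simp
    qed
  next
    case False
    then have a: "a > 0" and b: "b > 0" using lp_norm_nonneg[of p x] lp_norm_nonneg[of p y]
      unfolding a_def b_def by auto
    define t where "t = b / (a + b)"
    have t: "0 \<le> t" "t \<le> 1" using a b unfolding t_def by auto
    have "1 - t = a / (a+b)" using a b unfolding t_def by (simp add: field_simps)
    note t1 = this
    have pt: "norm (x m + y m) powr p \<le> (a+b) powr p * ((1 - t) * (norm (x m) / a) powr p + t * (norm (y m) / b) powr p)" for m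
    proof -
      have e1: "(1-t) * (norm (x m)/a) = norm (x m) / (a+b)" using a b unfolding t1 by simp
      have e2: "t * (norm (y m)/b) = norm (y m) / (a+b)" using a b unfolding t_def by simp
      have "(a+b) * ((1-t) * (norm (x m)/a) + t * (norm (y m) / b)) = norm (x m) + norm (y m)"
        using a b unfolding e1 e2 by (simp add: add_divide_distrib[symmetric])
      then have "norm (x m + y m) \<le> (a+b) * ((1-t) * (norm (x m)/a) + t * (norm (y m) / b))"
        using norm_triangle_ineq[of "x m" "y m"] by simp
      then have "norm (x m + y m) powr p \<le> ((a+b) * ((1-t) * (norm (x m)/a) + t * (norm (y m) / b))) powr p"
        using p by (intro powr_mono2) auto
      also have "\<dots> = (a+b) powr p * ((1-t) * (norm (x m)/a) + t * (norm (y m) / b)) powr p"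
        using a b t by (intro powr_mult; auto)
      also have "\<dots> \<le> (a+b) powr p * ((1 - t) * (norm (x m) / a) powr p + t * (norm (y m) / b) powr p)"
        using a b t p by (intro mult_left_mono powr_conv0) auto
      finally show ?thesis .
    qed
    have ea: "(norm (x m) / a) powr p = norm (x m) powr p / a powr p" for m
      using a by (simp add: powr_divide)
    have eb: "(norm (y m) / b) powr p = norm (y m) powr p / b powr p" for m
      using b by (simp add: powr_divide)
    have sR: "summable (\<lambda>m. (a+b) powr p * ((1 - t) * (norm (x m) / a) powr p + t * (norm (y m) / b) powr p))"
      unfolding ea eb by (intro summable_mult summable_add summable_divide sx sy)
    have sxy: "summable (\<lambda>m. norm (x m + y m) powr p)"
      by (rule summable_comparison_test[OF _ sR]) (use pt in auto)
    have "(\<Sum>m. norm (x m + y m) powr p) \<le> (\<Sum>m. (a+b) powr p * ((1 - t) * (norm (x m) / a) powr p + t * (norm (y m) / b) powr p))"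
      by (intro suminf_le pt sxy sR)
    also have "\<dots> = (a+b) powr p * ((1-t) * ((\<Sum>m. norm (x m) powr p) / a powr p) + t * ((\<Sum>m. norm (y m) powr p) / b powr p))"
      unfolding ea eb
      by (intro sums_unique[symmetric] sums_mult sums_add sums_divide summable_sums sx sy)
    also have "\<dots> = (a+b) powr p"
      using a b unfolding lp_norm_pow[OF p x, symmetric] lp_norm_pow[OF p y, symmetric] a_def[symmetric] b_def[symmetric]
      by simp
    finally have le: "(\<Sum>m. norm (x m + y m) powr p) \<le> (a+b) powr p" .
    have "lp_norm p (\<lambda>m. x m + y m) \<le> ((a+b) powr p) powr (1/p)"
      unfolding lp_norm_def using p by (intro powr_mono2) (auto intro!: suminf_nonneg sxy le)
    also have "\<dots> = a + b" using a b p by (simp add: powr_powr)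
    finally show ?thesis using sxy unfolding in_lp_def a_def b_def by simp
  qed
qed

lemma lp_sum:
  assumes p: "1 \<le> p" and v: "\<And>k. k \<in> F \<Longrightarrow> in_lp p (v k)" and F: "finite F"
  shows "in_lp p (\<lambda>m. \<Sum>k\<in>F. a k * v k m) \<and> lp_norm p (\<lambda>m. \<Sum>k\<in>F. a k * v k m) \<le> (\<Sum>k\<in>F. norm (a k) * lp_norm p (v k))"
  using F v
proof (induction F rule: finite_induct)
  case empty
  then show ?case unfolding in_lp_def lp_norm_def by simp
next
  case (insert k F)
  have s: "(\<lambda>m. \<Sum>k\<in>insert k F. a k * v k m) = (\<lambda>m. a k * v k m + (\<Sum>k\<in>F. a k * v k m))"
    using insert by simp
  have IH: "in_lp p (\<lambda>m. \<Sum>k\<in>F. a k * v k m) \<and> lp_norm p (\<lambda>m. \<Sum>k\<in>F. a k * v k m) \<le> (\<Sum>k\<in>F. norm (a k) * lp_norm p (v k))"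
    using insert by auto
  have A: "in_lp p (\<lambda>m. a k * v k m) \<and> lp_norm p (\<lambda>m. a k * v k m) = norm (a k) * lp_norm p (v k)"
    using lp_scale[OF p insert(4)[of k]] by simp
  from lp_triangle[OF p A[THEN conjunct1] IH[THEN conjunct1]] A IH
  show ?case unfolding s using insert by simp
qed

lemma prod_split_nat:
  fixes f :: "nat \<Rightarrow> real"
  shows "(\<Prod>k<j+L. f k) = (\<Prod>k<j. f k) * (\<Prod>i<L. f (j+i))"
  by (induction L) (auto simp: mult.assoc)

lemma prod_lower:
  fixes x y d :: "nat \<Rightarrow> real"
  assumes "\<And>i. 0 \<le> x i" "\<And>i. x i \<le> 1" "\<And>i. 0 \<le> y i" "\<And>i. y i \<le> 1" "\<And>i. 0 \<le> d i"
    "\<And>i. y i - d i \<le> x i"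
  shows "(\<Prod>i<n. y i) - (\<Sum>i<n. d i) \<le> (\<Prod>i<n. x i)"
proof (induction n)
  case 0 then show ?case by simp
next
  case (Suc n)
  define X where "X = (\<Prod>i<n. x i)"
  define Y where "Y = (\<Prod>i<n. y i)"
  define S where "S = (\<Sum>i<n. d i)"
  have X: "0 \<le> X" "X \<le> 1" unfolding X_def using assms by (auto intro: prod_nonneg prod_le_1)
  have Y: "0 \<le> Y" unfolding Y_def using assms by (auto intro: prod_nonneg)
  have S: "0 \<le> S" unfolding S_def using assms by (auto intro: sum_nonneg)
  have IH: "Y - S \<le> X" using Suc unfolding X_def Y_def S_def .
  have "X * x n \<ge> X * (y n - d n)" using X assms by (intro mult_left_mono) auto
  moreover have "X * (y n - d n) \<ge> X * y n - d n" using X assms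
    by (simp add: right_diff_distrib) (metis mult_left_le_one_le assms(5))
  moreover have "X * y n \<ge> (Y - S) * y n" using IH assms by (intro mult_right_mono) auto
  moreover have "(Y - S) * y n \<ge> Y * y n - S" using S assms
    by (simp add: left_diff_distrib) (metis mult_left_le S mult.commute assms(4))
  ultimately have "Y * y n - (S + d n) \<le> X * x n" by linarith
  then show ?case unfolding X_def Y_def S_def by (simp add: mult.commute)
qed

locale iidseq = prob_space M for M :: "'a measure" +
  fixes X :: "'a \<Rightarrow> complex" and Xs :: "nat \<Rightarrow> 'a \<Rightarrow> complex"
  assumes X_rv[measurable]: "X \<in> borel_measurable M"
    and Xs_rv[measurable]: "\<And>k. Xs k \<in> borel_measurable M"
    and Xs_indep: "indep_vars (\<lambda>_. borel) Xs UNIV"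
    and Xs_distr: "\<And>k. distr M borel (Xs k) = distr M borel X"
begin

definition mu :: "complex measure" where "mu = distr M borel X"

lemma prob_mu: "prob_space mu"
  unfolding mu_def by (rule prob_space_distr) simp

lemma probXs:
  assumes "B \<in> sets borel"
  shows "prob {\<omega>\<in>space M. Xs k \<omega> \<in> B} = measure mu B"
proof -
  have "measure mu B = measure (distr M borel (Xs k)) B" unfolding mu_def Xs_distr ..
  also have "\<dots> = measure M (Xs k -` B \<inter> space M)" using assms by (intro measure_distr) auto
  finally show ?thesis by (simp add: vimage_def Int_def conj_commute)
qed

lemma probX:
  assumes "B \<in> sets borel"
  shows "prob {\<omega>\<in>space M. X \<omega> \<in> B} = measure mu B"
proof -
  have "measure mu B = measure M (X -` B \<inter> space M)" unfolding mu_def using assms by (intro measure_distr) auto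
  then show ?thesis by (simp add: vimage_def Int_def conj_commute)
qed

lemma prod_fin:
  assumes C: "\<And>m. C m \<in> sets borel"
  shows "prob {\<omega>\<in>space M. \<forall>m<N. Xs m \<omega> \<in> C m} = (\<Prod>m<N. measure mu (C m))"
proof (cases "N = 0")
  case True then show ?thesis by (simp add: prob_space)
next
  case False
  have ind: "indep_sets (\<lambda>i. {Xs i -` A \<inter> space M | A. A \<in> sets borel}) UNIV"
    using Xs_indep unfolding indep_vars_def2 by simp
  have eq: "{\<omega>\<in>space M. \<forall>m<N. Xs m \<omega> \<in> C m} = (\<Inter>m\<in>{..<N}. Xs m -` C m \<inter> space M)"
    using False by auto
  have "prob (\<Inter>m\<in>{..<N}. Xs m -` C m \<inter> space M) = (\<Prod>m<N. prob (Xs m -` C m \<inter> space M))"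
    by (rule indep_setsD[OF ind]) (use False C in auto)
  also have "\<dots> = (\<Prod>m<N. measure mu (C m))"
  proof (intro prod.cong refl)
    fix m
    have "Xs m -` C m \<inter> space M = {\<omega>\<in>space M. Xs m \<omega> \<in> C m}" by auto
    then show "prob (Xs m -` C m \<inter> space M) = measure mu (C m)" using probXs[OF C] by simp
  qed
  finally show ?thesis unfolding eq .
qed

lemma prod_inf:
  assumes C: "\<And>m. C m \<in> sets borel"
  shows "(\<lambda>N. \<Prod>m<N. measure mu (C m)) \<longlonglongrightarrow> prob {\<omega>\<in>space M. \<forall>m. Xs m \<omega> \<in> C m}"
proof -
  define A where "A N = {\<omega>\<in>space M. \<forall>m<N. Xs m \<omega> \<in> C m}" for N
  have "range A \<subseteq> events" unfolding A_def using C by auto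
  moreover have "decseq A" unfolding A_def decseq_def by auto
  ultimately have "(\<lambda>N. prob (A N)) \<longlonglongrightarrow> prob (\<Inter>N. A N)" by (rule finite_Lim_measure_decseq)
  moreover have "(\<Inter>N. A N) = {\<omega>\<in>space M. \<forall>m. Xs m \<omega> \<in> C m}" unfolding A_def by auto
  ultimately show ?thesis unfolding A_def prod_fin[OF C] by simp
qed

lemma prod_shift:
  assumes D: "\<And>k. D k \<in> sets borel"
  shows "(\<lambda>N. \<Prod>k<N. measure mu (D k)) \<longlonglongrightarrow> prob {\<omega>\<in>space M. \<forall>k. Xs (k+n) \<omega> \<in> D k}"
proof -
  define C where "C m = (if n \<le> m then D (m - n) else UNIV)" for m
  have C: "C m \<in> sets borel" for m unfolding C_def using D by auto
  have eq: "{\<omega>\<in>space M. \<forall>m. Xs m \<omega> \<in> C m} = {\<omega>\<in>space M. \<forall>k. Xs (k+n) \<omega> \<in> D k}"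
  proof safe
    fix \<omega> k assume "\<omega> \<in> space M" "\<forall>m. Xs m \<omega> \<in> C m"
    then show "Xs (k+n) \<omega> \<in> D k" unfolding C_def by (metis add_diff_cancel_right' le_add2)
  next
    fix \<omega> m assume "\<omega> \<in> space M" "\<forall>k. Xs (k+n) \<omega> \<in> D k"
    then show "Xs m \<omega> \<in> C m" unfolding C_def by (metis le_add_diff_inverse2 UNIV_I)
  qed
  have mU: "measure mu UNIV = 1" using prob_mu prob_space.prob_space by (metis space_borel space_distr mu_def)
  have pe: "(\<Prod>m<n+L. measure mu (C m)) = (\<Prod>k<L. measure mu (D k))" for L
    unfolding prod_split_nat by (simp add: C_def mU)
  have "(\<lambda>L. \<Prod>m<L+n. measure mu (C m)) \<longlonglongrightarrow> prob {\<omega>\<in>space M. \<forall>m. Xs m \<omega> \<in> C m}"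
    using LIMSEQ_ignore_initial_segment[OF prod_inf[OF C], where k=n] by simp
  then show ?thesis using pe unfolding eq by (simp add: add.commute)
qed

end

lemma tail_sum_le:
  fixes q :: "nat \<Rightarrow> real"
  assumes q: "summable q" "\<And>k. 0 \<le> q k"
  shows "(\<Sum>i<L. q (j+i)) \<le> (\<Sum>i. q (i+j))"
proof -
  have s: "summable (\<lambda>i. q (i+j))" using summable_ignore_initial_segment[OF q(1)] .
  have "(\<Sum>i<L. q (i+j)) \<le> (\<Sum>i. q (i+j))" by (rule sum_le_suminf[OF s]) (use q in auto)
  then show ?thesis by (simp add: add.commute)
qed

lemma cov_bound:
  fixes a b :: "nat \<Rightarrow> real" and j :: nat
  assumes a: "\<And>k. 0 \<le> a k" "\<And>k. a k \<le> 1"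
    and b: "\<And>k. 0 \<le> b k" "\<And>k. b k \<le> 1"
    and q: "summable (\<lambda>k. 1 - a k)"
    and bj: "\<And>k. k < j \<Longrightarrow> b k = a k"
    and bu: "\<And>k. j \<le> k \<Longrightarrow> b k \<le> a (k - j)"
    and bl: "\<And>k. j \<le> k \<Longrightarrow> a (k - j) - (1 - a k) \<le> b k"
    and P: "(\<lambda>N. \<Prod>k<N. a k) \<longlonglongrightarrow> c"
    and Q: "(\<lambda>N. \<Prod>k<N. b k) \<longlonglongrightarrow> c2"
  shows "\<bar>c2 - c^2\<bar> \<le> (\<Sum>i. 1 - a (i+j))"
proof -
  define \<rho> where "\<rho> = (\<Sum>i. 1 - a (i+j))"
  define Pj where "Pj = (\<Prod>k<j. a k)"
  have q0: "0 \<le> 1 - a k" for k using a by simp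
  have \<rho>0: "0 \<le> \<rho>" unfolding \<rho>_def
    by (intro suminf_nonneg summable_ignore_initial_segment[OF q]) (use q0 in auto)
  have tl: "(\<Sum>i<L. 1 - a (j+i)) \<le> \<rho>" for L unfolding \<rho>_def by (rule tail_sum_le[OF q q0])
  have Pj: "0 \<le> Pj" "Pj \<le> 1" unfolding Pj_def using a by (auto intro: prod_nonneg prod_le_1)
  have c: "0 \<le> c" "c \<le> 1"
  proof -
    show "0 \<le> c" by (rule LIMSEQ_le_const[OF P]) (use a in \<open>auto intro: prod_nonneg\<close>)
    show "c \<le> 1" by (rule LIMSEQ_le_const2[OF P]) (use a in \<open>auto intro: prod_le_1\<close>)
  qed
  have Qs: "(\<Prod>k<j+L. b k) = Pj * (\<Prod>i<L. b (j+i))" for L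
    unfolding prod_split_nat Pj_def using bj by simp
  have Ps: "(\<Prod>k<j+L. a k) = Pj * (\<Prod>i<L. a (j+i))" for L
    unfolding prod_split_nat Pj_def by simp
  have up: "(\<Prod>i<L. b (j+i)) \<le> (\<Prod>i<L. a i)" for L
  proof (rule prod_mono)
    fix i assume "i \<in> {..<L}"
    have "b (j+i) \<le> a (j + i - j)" by (rule bu) simp
    then show "0 \<le> b (j+i) \<and> b (j+i) \<le> a i" using b by simp
  qed
  have lo: "(\<Prod>i<L. a i) - \<rho> \<le> (\<Prod>i<L. b (j+i))" for L
  proof -
    have "(\<Prod>i<L. a i) - (\<Sum>i<L. 1 - a (j+i)) \<le> (\<Prod>i<L. b (j+i))"
    proof (rule prod_lower)
      fix i
      have "a (j + i - j) - (1 - a (j+i)) \<le> b (j+i)" by (rule bl) simp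
      then show "a i - (1 - a (j+i)) \<le> b (j+i)" by simp
    qed (use a b in auto)
    then show ?thesis using tl[of L] by linarith
  qed
  have lo2: "Pj * (1 - \<rho>) \<le> (\<Prod>k<j+L. a k)" for L
  proof -
    have "(\<Prod>i<L. (1::real)) - (\<Sum>i<L. 1 - a (j+i)) \<le> (\<Prod>i<L. a (j+i))"
      by (rule prod_lower) (use a in auto)
    then have "1 - \<rho> \<le> (\<Prod>i<L. a (j+i))" using tl[of L] by simp
    then show ?thesis unfolding Ps using Pj by (intro mult_left_mono) auto
  qed
  have up2: "(\<Prod>k<j+L. a k) \<le> Pj" for L
    unfolding Ps using Pj a by (auto intro!: mult_left_le prod_le_1 prod_nonneg)
  have PL: "(\<lambda>L. \<Prod>k<j+L. a k) \<longlonglongrightarrow> c"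
    using LIMSEQ_ignore_initial_segment[OF P, where k=j] by (simp add: add.commute)
  have QL: "(\<lambda>L. \<Prod>k<j+L. b k) \<longlonglongrightarrow> c2"
    using LIMSEQ_ignore_initial_segment[OF Q, where k=j] by (simp add: add.commute)
  have c_lo: "Pj * (1 - \<rho>) \<le> c" by (rule LIMSEQ_le_const[OF PL]) (use lo2 in auto)
  have c_up: "c \<le> Pj" by (rule LIMSEQ_le_const2[OF PL]) (use up2 in auto)
  have c2_up: "c2 \<le> Pj * c"
  proof (rule LIMSEQ_le[OF QL])
    show "(\<lambda>L. Pj * (\<Prod>i<L. a i)) \<longlonglongrightarrow> Pj * c" by (intro tendsto_mult_left P)
    show "\<exists>N. \<forall>n\<ge>N. (\<Prod>k<j+n. b k) \<le> Pj * (\<Prod>i<n. a i)"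
      unfolding Qs using Pj up by (auto intro: mult_left_mono)
  qed
  have c2_lo: "Pj * (c - \<rho>) \<le> c2"
  proof (rule LIMSEQ_le[OF _ QL])
    show "(\<lambda>L. Pj * ((\<Prod>i<L. a i) - \<rho>)) \<longlonglongrightarrow> Pj * (c - \<rho>)" by (intro tendsto_intros P)
    show "\<exists>N. \<forall>n\<ge>N. Pj * ((\<Prod>i<n. a i) - \<rho>) \<le> (\<Prod>k<j+n. b k)"
      unfolding Qs using Pj lo by (auto intro: mult_left_mono)
  qed
  have "c2 - c^2 \<le> \<rho>"
  proof -
    have "c2 - c^2 \<le> c * (Pj - c)" using c2_up by (simp add: power2_eq_square algebra_simps)
    also have "\<dots> \<le> c * (Pj * \<rho>)" using c c_lo by (intro mult_left_mono) (auto simp: algebra_simps)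
    also have "\<dots> \<le> Pj * \<rho>" using c Pj \<rho>0 by (intro mult_left_le_one_le) auto
    also have "\<dots> \<le> \<rho>" using Pj \<rho>0 by (intro mult_left_le_one_le) auto
    finally show ?thesis .
  qed
  moreover have "-\<rho> \<le> c2 - c^2"
  proof -
    have "Pj * c \<ge> c * c" using c c_up by (simp add: mult_right_mono)
    moreover have "Pj * \<rho> \<le> \<rho>" using Pj \<rho>0 by (simp add: mult_left_le_one_le)
    ultimately show ?thesis using c2_lo by (simp add: power2_eq_square algebra_simps)
  qed
  ultimately show ?thesis unfolding \<rho>_def by linarith
qed

lemma prod_limit_pos:
  fixes a :: "nat \<Rightarrow> real"
  assumes a: "\<And>k. 0 < a k" "\<And>k. a k \<le> 1"
    and q: "summable (\<lambda>k. 1 - a k)"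
    and P: "(\<lambda>N. \<Prod>k<N. a k) \<longlonglongrightarrow> c"
  shows "0 < c"
proof -
  have "(\<lambda>j. \<Sum>i. 1 - a (i+j)) \<longlonglongrightarrow> 0" by (rule suminf_exist_split2[OF q])
  then have "eventually (\<lambda>j. (\<Sum>i. 1 - a (i+j)) < 1/2) sequentially"
    by (rule order_tendstoD) simp
  then obtain j where j: "(\<Sum>i. 1 - a (i+j)) < 1/2"
    by (auto simp: eventually_sequentially)
  define \<rho> where "\<rho> = (\<Sum>i. 1 - a (i+j))"
  define Pj where "Pj = (\<Prod>k<j. a k)"
  have Pj: "0 < Pj" unfolding Pj_def using a by (auto intro: prod_pos)
  have q0: "0 \<le> 1 - a k" for k using a by simp
  have tl: "(\<Sum>i<L. 1 - a (j+i)) \<le> \<rho>" for L unfolding \<rho>_def by (rule tail_sum_le[OF q q0])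
  have lo2: "Pj * (1 - \<rho>) \<le> (\<Prod>k<j+L. a k)" for L
  proof -
    have "(\<Prod>i<L. (1::real)) - (\<Sum>i<L. 1 - a (j+i)) \<le> (\<Prod>i<L. a (j+i))"
      by (rule prod_lower) (use a in \<open>auto simp: less_imp_le\<close>)
    then have "1 - \<rho> \<le> (\<Prod>i<L. a (j+i))" using tl[of L] by simp
    then show ?thesis unfolding prod_split_nat Pj_def[symmetric] using Pj by (intro mult_left_mono) auto
  qed
  have PL: "(\<lambda>L. \<Prod>k<j+L. a k) \<longlonglongrightarrow> c"
    using LIMSEQ_ignore_initial_segment[OF P, where k=j] by (simp add: add.commute)
  have "Pj * (1 - \<rho>) \<le> c" by (rule LIMSEQ_le_const[OF PL]) (use lo2 in auto)
  moreover have "0 < Pj * (1 - \<rho>)" using Pj j unfolding \<rho>_def by simp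
  ultimately show ?thesis by linarith
qed

lemma interp:
  fixes S :: "nat \<Rightarrow> real" and Mi :: "nat \<Rightarrow> nat"
  assumes S0: "\<And>n. 0 \<le> S n" and Smono: "\<And>n. S n \<le> S (Suc n)"
    and Mi: "strict_mono Mi" and Mi0: "1 \<le> Mi 0"
    and ratio: "(\<lambda>i. real (Mi (Suc i)) / real (Mi i)) \<longlonglongrightarrow> 1"
    and sub: "(\<lambda>i. S (Mi i) / real (Mi i)) \<longlonglongrightarrow> c"
  shows "(\<lambda>n. S n / real n) \<longlonglongrightarrow> c"
proof -
  have Smono': "S m \<le> S n" if "m \<le> n" for m n by (rule lift_Suc_mono_le[of S, OF Smono that])
  have Mpos: "0 < Mi i" for i 
  proof -
    have "Mi 0 \<le> Mi i" using Mi by (simp add: strict_mono_less_eq)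
    then show ?thesis using Mi0 by simp
  qed
  define \<iota> where "\<iota> n = (LEAST i. n < Mi (Suc i))" for n
  have ex: "n < Mi (Suc n)" for n using seq_suble[OF Mi, of "Suc n"] by simp
  have up: "n < Mi (Suc (\<iota> n))" for n unfolding \<iota>_def by (rule LeastI[of _ n]) (rule ex)
  have lo: "Mi (\<iota> n) \<le> n" if "Mi 0 \<le> n" for n
  proof (cases "\<iota> n")
    case 0 then show ?thesis using that by simp
  next
    case (Suc i)
    have "\<not> n < Mi (Suc i)" using not_less_Least[of i "\<lambda>i. n < Mi (Suc i)"] Suc unfolding \<iota>_def by simp
    then show ?thesis using Suc by simp
  qed
  have lim_\<iota>: "filterlim \<iota> at_top sequentially"
    unfolding filterlim_at_top eventually_sequentially
  proof (intro allI exI impI)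
    fix i n assume "Mi i \<le> n"
    show "i \<le> \<iota> n"
    proof (rule ccontr)
      assume "\<not> i \<le> \<iota> n"
      then have "Suc (\<iota> n) \<le> i" by simp
      then have "Mi (Suc (\<iota> n)) \<le> Mi i" using Mi by (simp add: strict_mono_less_eq)
      then show False using up[of n] \<open>Mi i \<le> n\<close> by simp
    qed
  qed
  have ratio': "(\<lambda>i. real (Mi i) / real (Mi (Suc i))) \<longlonglongrightarrow> 1"
    using tendsto_inverse[OF ratio] by simp
  have subS: "(\<lambda>i. S (Mi (Suc i)) / real (Mi (Suc i))) \<longlonglongrightarrow> c"
    using LIMSEQ_Suc[OF sub] .
  define f where "f i = S (Mi i) / real (Mi i) * (real (Mi i) / real (Mi (Suc i)))" for i
  define g where "g i = S (Mi (Suc i)) / real (Mi (Suc i)) * (real (Mi (Suc i)) / real (Mi i))" for i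
  have f: "f \<longlonglongrightarrow> c" unfolding f_def using tendsto_mult[OF sub ratio'] by simp
  have g: "g \<longlonglongrightarrow> c" unfolding g_def using tendsto_mult[OF subS ratio] by simp
  have fe: "f i = S (Mi i) / real (Mi (Suc i))" for i unfolding f_def using Mpos[of i] by simp
  have ge: "g i = S (Mi (Suc i)) / real (Mi i)" for i unfolding g_def using Mpos[of "Suc i"] by simp
  have f\<iota>: "(\<lambda>n. f (\<iota> n)) \<longlonglongrightarrow> c" by (rule filterlim_compose[OF f lim_\<iota>])
  have g\<iota>: "(\<lambda>n. g (\<iota> n)) \<longlonglongrightarrow> c" by (rule filterlim_compose[OF g lim_\<iota>])
  show ?thesis
  proof (rule tendsto_sandwich[OF _ _ f\<iota> g\<iota>])
    show "eventually (\<lambda>n. f (\<iota> n) \<le> S n / real n) sequentially"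
      unfolding eventually_sequentially
    proof (intro exI allI impI)
      fix n assume n: "Mi 0 \<le> n"
      have npos: "0 < real n" using n Mi0 by simp
      have "S (Mi (\<iota> n)) \<le> S n" using lo[OF n] by (rule Smono')
      then have "S (Mi (\<iota> n)) / real (Mi (Suc (\<iota> n))) \<le> S n / real (Mi (Suc (\<iota> n)))"
        using Mpos by (intro divide_right_mono) auto
      also have "\<dots> \<le> S n / real n" using up[of n] npos S0[of n] by (intro divide_left_mono) auto
      finally show "f (\<iota> n) \<le> S n / real n" unfolding fe .
    qed
    show "eventually (\<lambda>n. S n / real n \<le> g (\<iota> n)) sequentially"
      unfolding eventually_sequentially
    proof (intro exI allI impI)
      fix n assume n: "Mi 0 \<le> n"
      have npos: "0 < real n" using n Mi0 by simp
      have "S n \<le> S (Mi (Suc (\<iota> n)))" using up[of n] by (intro Smono') simp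
      then have "S n / real n \<le> S (Mi (Suc (\<iota> n))) / real n" using npos by (intro divide_right_mono) auto
      also have "\<dots> \<le> S (Mi (Suc (\<iota> n))) / real (Mi (\<iota> n))"
        using lo[OF n] Mpos[of "\<iota> n"] S0 by (intro divide_left_mono) auto
      finally show "S n / real n \<le> g (\<iota> n)" unfolding ge .
    qed
  qed
qed

lemma arith_bound:
  fixes x K e \<gamma> V :: real and a :: nat
  assumes x: "1 \<le> x" and a: "2 \<le> real a * \<gamma>" and K: "0 \<le> K" and e: "0 < e"
    and V: "V \<le> x^(a+2) * (2 * x^a) + x^(a+2) * (x^(a+2) * (K * (x^a) powr (-\<gamma>)))"
  shows "V / (e * x^(a+2))^2 \<le> (2 + K) / e^2 * inverse (x^2)"
proof -
  have xp: "0 < x" using x by simp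
  have Lp: "(x^a) powr (-\<gamma>) \<le> inverse (x^2)"
  proof -
    have "(x^a) powr (-\<gamma>) = x powr (- (real a * \<gamma>))"
      using xp by (simp add: powr_realpow[symmetric] powr_powr)
    also have "\<dots> \<le> x powr (-2)" using x a by (intro powr_mono) auto
    also have "\<dots> = inverse (x^2)" using xp by (simp add: powr_minus powr_numeral)
    finally show ?thesis .
  qed
  have M2: "x^(a+2) = x^2 * x^a" by (simp only: power_add mult.commute)
  have "V / (e * x^(a+2))^2 \<le> (x^(a+2) * (2 * x^a) + x^(a+2) * (x^(a+2) * (K * (x^a) powr (-\<gamma>)))) / (e * x^(a+2))^2"
    using V by (intro divide_right_mono) auto
  also have "\<dots> = 2 / e^2 * inverse (x^2) + K * (x^a) powr (-\<gamma>) / e^2"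
    using xp e unfolding M2 by (simp add: field_simps power2_eq_square)
  also have "\<dots> \<le> 2 / e^2 * inverse (x^2) + K * inverse (x^2) / e^2"
    using Lp K e by (intro add_left_mono divide_right_mono mult_left_mono) auto
  also have "\<dots> = (2 + K) / e^2 * inverse (x^2)" by (simp add: divide_inverse algebra_simps)
  finally show ?thesis .
qed

lemma tendsto_from_eps:
  fixes f :: "nat \<Rightarrow> real"
  assumes "\<And>m. eventually (\<lambda>i. \<bar>f i - c\<bar> < 1 / real (Suc m)) sequentially"
  shows "f \<longlonglongrightarrow> c"
proof (rule tendstoI)
  fix r :: real assume r: "0 < r"
  obtain m where m: "0 < m" "inverse (real m) < r" using ex_inverse_of_nat_less[OF r] by auto
  have "1 / real (Suc m) \<le> inverse (real m)" using m by (simp add: field_simps)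
  then show "eventually (\<lambda>i. dist (f i) c < r) sequentially"
    using assms[of m] m by (auto elim!: eventually_mono simp: dist_real_def)
qed

context iidseq
begin

lemma sets_mu[simp]: "sets mu = sets borel" and space_mu[simp]: "space mu = UNIV"
  unfolding mu_def by auto

lemma mu_mono: "A \<subseteq> B \<Longrightarrow> B \<in> sets borel \<Longrightarrow> measure mu A \<le> measure mu B"
proof -
  assume "A \<subseteq> B" "B \<in> sets borel"
  interpret mu: prob_space mu by (rule prob_mu)
  show ?thesis using mu.finite_measure_mono \<open>A \<subseteq> B\<close> \<open>B \<in> sets borel\<close> by simp
qed

lemma mu_le1: "measure mu A \<le> 1"
proof -
  interpret mu: prob_space mu by (rule prob_mu)
  show ?thesis by simp
qed

lemma mu_int_lower:
  assumes "A \<in> sets borel" "B \<in> sets borel"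
  shows "measure mu B - (1 - measure mu A) \<le> measure mu (A \<inter> B)"
proof -
  interpret mu: prob_space mu by (rule prob_mu)
  have "measure mu B = measure mu (A \<inter> B) + measure mu (B - A)"
  proof -
    have e: "A \<inter> B \<union> (B - A) = B" by blast
    have d: "(A \<inter> B) \<inter> (B - A) = {}" by blast
    show ?thesis using mu.finite_measure_Union[of "A \<inter> B" "B - A"] e d assms by simp
  qed
  moreover have "measure mu (B - A) \<le> measure mu (UNIV - A)"
    using assms by (intro mu_mono) auto
  moreover have "measure mu (UNIV - A) = 1 - measure mu A"
    using mu.prob_compl[of A] assms by simp
  ultimately show ?thesis by linarith
qed

context
  fixes B :: "nat \<Rightarrow> complex set"
  assumes B_borel[measurable]: "\<And>k. B k \<in> sets borel"
    and B_pos: "\<And>k. measure mu (B k) > 0"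
    and B_sum: "summable (\<lambda>k. 1 - measure mu (B k))"
begin

definition G :: "nat \<Rightarrow> 'a set" where
  "G n = {\<omega>\<in>space M. \<forall>k. Xs (k+n) \<omega> \<in> B k}"

definition cc :: real where "cc = lim (\<lambda>N. \<Prod>k<N. measure mu (B k))"

definition rho :: "nat \<Rightarrow> real" where "rho j = (\<Sum>i. 1 - measure mu (B (i+j)))"

lemma G_ev[measurable]: "G n \<in> events"
  unfolding G_def by measurable

lemma P_lim: "(\<lambda>N. \<Prod>k<N. measure mu (B k)) \<longlonglongrightarrow> cc"
  using prod_shift[where D=B and n=0, OF B_borel] unfolding cc_def
  by (metis (no_types, lifting) convergentI convergent_LIMSEQ_iff)

lemma prob_G: "prob (G n) = cc"
  using LIMSEQ_unique[OF prod_shift[where D=B and n=n, OF B_borel] P_lim] unfolding G_def by simp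

lemma cc_pos: "cc > 0"
  by (rule prod_limit_pos[OF B_pos mu_le1 B_sum P_lim])

lemma cov_G: "\<bar>prob (G n \<inter> G (n+j)) - cc^2\<bar> \<le> rho j"
proof -
  define Sh where "Sh k = (if j \<le> k then B (k - j) else UNIV)" for k
  define D where "D k = B k \<inter> Sh k" for k
  have D: "D k \<in> sets borel" for k unfolding D_def Sh_def by auto
  have eq: "G n \<inter> G (n+j) = {\<omega>\<in>space M. \<forall>k. Xs (k+n) \<omega> \<in> D k}"
  proof safe
    fix \<omega> k assume A: "\<omega> \<in> G n" "\<omega> \<in> G (n+j)"
    have 1: "Xs (k+n) \<omega> \<in> B k" using A(1) unfolding G_def by blast
    have 2: "Xs (k+n) \<omega> \<in> Sh k"
    proof (cases "j \<le> k")
      case True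
      have "Xs ((k-j) + (n+j)) \<omega> \<in> B (k-j)" using A(2) unfolding G_def by blast
      moreover have "(k-j) + (n+j) = k + n" using True by simp
      ultimately show ?thesis unfolding Sh_def using True by simp
    qed (simp add: Sh_def)
    show "Xs (k+n) \<omega> \<in> D k" unfolding D_def using 1 2 by blast
  next
    fix \<omega> assume "\<omega> \<in> G n" then show "\<omega> \<in> space M" unfolding G_def by blast
  next
    fix \<omega> assume "\<omega> \<in> space M" "\<forall>k. Xs (k+n) \<omega> \<in> D k"
    then show "\<omega> \<in> G n" unfolding G_def D_def by auto
  next
    fix \<omega> assume w: "\<omega> \<in> space M" "\<forall>k. Xs (k+n) \<omega> \<in> D k"
    show "\<omega> \<in> G (n+j)" unfolding G_def
    proof (intro CollectI conjI allI w(1))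
      fix k
      have "Xs ((k+j)+n) \<omega> \<in> D (k+j)" using w by blast
      then show "Xs (k + (n+j)) \<omega> \<in> B k" unfolding D_def Sh_def by (simp add: add_ac)
    qed
  qed
  have Q: "(\<lambda>N. \<Prod>k<N. measure mu (D k)) \<longlonglongrightarrow> prob (G n \<inter> G (n+j))"
    unfolding eq by (rule prod_shift[OF D])
  have "\<bar>prob (G n \<inter> G (n+j)) - cc^2\<bar> \<le> (\<Sum>i. 1 - measure mu (B (i+j)))"
  proof (rule cov_bound[OF _ mu_le1 _ mu_le1 B_sum _ _ _ P_lim Q])
    show "0 \<le> measure mu (B k)" for k by simp
    show "0 \<le> measure mu (D k)" for k by simp
    show "measure mu (D k) = measure mu (B k)" if "k < j" for k using that unfolding D_def Sh_def by simp
    show "measure mu (D k) \<le> measure mu (B (k - j))" if "j \<le> k" for k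
      using that unfolding D_def Sh_def by (intro mu_mono) auto
    show "measure mu (B (k - j)) - (1 - measure mu (B k)) \<le> measure mu (D k)" if "j \<le> k" for k
      using that mu_int_lower[of "B k" "B (k-j)"] unfolding D_def Sh_def by simp
  qed
  then show ?thesis unfolding rho_def .
qed

lemma cov_G1: "\<bar>prob (G n \<inter> G n') - cc^2\<bar> \<le> 1"
proof -
  have "0 \<le> prob (G n \<inter> G n')" "prob (G n \<inter> G n') \<le> 1" by auto
  moreover have "cc \<le> 1" using prob_G[of 0] prob_le_1[of "G 0"] by simp
  then have "0 \<le> cc^2" "cc^2 \<le> 1" using cc_pos by (auto simp: power_le_one)
  ultimately show ?thesis by linarith
qed

lemma cov_G2: "\<bar>prob (G n \<inter> G n') - cc^2\<bar> \<le> rho (if n \<le> n' then n' - n else n - n')"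
proof (cases "n \<le> n'")
  case True
  then show ?thesis using cov_G[of n "n' - n"] by simp
next
  case False
  then show ?thesis using cov_G[of n' "n - n'"] by (simp add: Int_commute)
qed


definition Sc :: "nat \<Rightarrow> 'a \<Rightarrow> real" where
  "Sc N \<omega> = (\<Sum>n\<in>{1..N}. indicator (G n) \<omega>)"

definition Z :: "nat \<Rightarrow> 'a \<Rightarrow> real" where
  "Z N \<omega> = Sc N \<omega> - real N * cc"

lemma Z_meas[measurable]: "Z N \<in> borel_measurable M"
  unfolding Z_def Sc_def by measurable

lemma term_int:
  assumes [measurable]: "A \<in> events" "C \<in> events"
  shows "integrable M (\<lambda>\<omega>. (indicator A \<omega> - cc) * (indicator C \<omega> - cc) :: real)
    \<and> expectation (\<lambda>\<omega>. (indicator A \<omega> - cc) * (indicator C \<omega> - cc) :: real)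
       = prob (A \<inter> C) - cc * prob A - cc * prob C + cc^2"
proof -
  have eq: "(\<lambda>\<omega>. (indicator A \<omega> - cc) * (indicator C \<omega> - cc) :: real)
     = (\<lambda>\<omega>. indicator (A \<inter> C) \<omega> - cc * indicator A \<omega> - cc * indicator C \<omega> + cc^2)"
    by (auto simp: indicator_def power2_eq_square algebra_simps)
  have iA: "integrable M (indicator A :: 'a \<Rightarrow> real)"
    by (rule integrable_real_indicator) (use assms in \<open>auto simp: less_top[symmetric]\<close>)
  have iC: "integrable M (indicator C :: 'a \<Rightarrow> real)"
    by (rule integrable_real_indicator) (use assms in \<open>auto simp: less_top[symmetric]\<close>)
  have iAC: "integrable M (indicator (A \<inter> C) :: 'a \<Rightarrow> real)"
    by (rule integrable_real_indicator) (use assms in \<open>auto simp: less_top[symmetric]\<close>)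
  have "integrable M (\<lambda>\<omega>. indicator (A \<inter> C) \<omega> - cc * indicator A \<omega> - cc * indicator C \<omega> + cc^2 :: real)"
    using iA iC iAC by simp
  moreover have "expectation (\<lambda>\<omega>. indicator (A \<inter> C) \<omega> - cc * indicator A \<omega> - cc * indicator C \<omega> + cc^2 :: real)
     = prob (A \<inter> C) - cc * prob A - cc * prob C + cc^2"
  proof -
    have i1: "integrable M (\<lambda>\<omega>. indicator (A \<inter> C) \<omega> - cc * indicator A \<omega> :: real)" using iA iAC by simp
    have i2: "integrable M (\<lambda>\<omega>. indicator (A \<inter> C) \<omega> - cc * indicator A \<omega> - cc * indicator C \<omega> :: real)" using iA iC iAC by simp
    have "expectation (\<lambda>\<omega>. indicator (A \<inter> C) \<omega> - cc * indicator A \<omega> - cc * indicator C \<omega> + cc^2 :: real)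
       = expectation (\<lambda>\<omega>. indicator (A \<inter> C) \<omega> - cc * indicator A \<omega> - cc * indicator C \<omega> :: real) + cc^2"
      using Bochner_Integration.integral_add[OF i2 integrable_const[where a="cc^2"]] by (simp add: prob_space)
    also have "expectation (\<lambda>\<omega>. indicator (A \<inter> C) \<omega> - cc * indicator A \<omega> - cc * indicator C \<omega> :: real)
       = expectation (\<lambda>\<omega>. indicator (A \<inter> C) \<omega> - cc * indicator A \<omega> :: real) - expectation (\<lambda>\<omega>. cc * indicator C \<omega> :: real)"
      using iC by (intro Bochner_Integration.integral_diff i1) simp
    also have "expectation (\<lambda>\<omega>. indicator (A \<inter> C) \<omega> - cc * indicator A \<omega> :: real)
       = expectation (indicator (A \<inter> C) :: 'a \<Rightarrow> real) - expectation (\<lambda>\<omega>. cc * indicator A \<omega> :: real)"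
      using iA by (intro Bochner_Integration.integral_diff iAC) simp
    finally show ?thesis using assms by (simp add: Int_absorb2 sets.sets_into_space Int_assoc)
  qed
  ultimately show ?thesis unfolding eq by simp
qed

lemma Z_sum: "Z N \<omega> = (\<Sum>n\<in>{1..N}. indicator (G n) \<omega> - cc)"
  unfolding Z_def Sc_def by (simp add: sum_subtractf)

lemma Z_sq:
  "integrable M (\<lambda>\<omega>. (Z N \<omega>)^2) \<and>
   expectation (\<lambda>\<omega>. (Z N \<omega>)^2) = (\<Sum>n\<in>{1..N}. \<Sum>n'\<in>{1..N}. prob (G n \<inter> G n') - cc^2)"
proof -
  have eq: "(\<lambda>\<omega>. (Z N \<omega>)^2) = (\<lambda>\<omega>. \<Sum>n\<in>{1..N}. \<Sum>n'\<in>{1..N}. (indicator (G n) \<omega> - cc) * (indicator (G n') \<omega> - cc))"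
    unfolding Z_sum power2_eq_square sum_product ..
  have ti: "integrable M (\<lambda>\<omega>. (indicator (G n) \<omega> - cc) * (indicator (G n') \<omega> - cc) :: real)" for n n'
    using term_int[OF G_ev G_ev] by blast
  have te: "expectation (\<lambda>\<omega>. (indicator (G n) \<omega> - cc) * (indicator (G n') \<omega> - cc) :: real) = prob (G n \<inter> G n') - cc^2" for n n'
    using term_int[OF G_ev G_ev, of n n'] by (simp add: prob_G power2_eq_square)
  show ?thesis unfolding eq
    by (simp add: ti te integrable_sum Bochner_Integration.integral_sum)
qed

lemma Z_markov:
  assumes "e > 0"
  shows "prob {\<omega>\<in>space M. e \<le> \<bar>Z N \<omega>\<bar>} \<le> (\<Sum>n\<in>{1..N}. \<Sum>n'\<in>{1..N}. prob (G n \<inter> G n') - cc^2) / e^2"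
proof -
  have "prob {\<omega>\<in>space M. e \<le> \<bar>Z N \<omega>\<bar>} \<le> prob {\<omega>\<in>space M. e^2 \<le> (Z N \<omega>)^2}"
  proof (rule finite_measure_mono)
    show "{\<omega>\<in>space M. e \<le> \<bar>Z N \<omega>\<bar>} \<subseteq> {\<omega>\<in>space M. e^2 \<le> (Z N \<omega>)^2}"
      using assms by (auto simp: abs_le_square_iff[symmetric] intro: order.trans[OF _ abs_ge_self])
  qed measurable
  also have "\<dots> \<le> expectation (\<lambda>\<omega>. (Z N \<omega>)^2) / e^2"
    using Z_sq[of N] assms by (intro integral_Markov_inequality_measure[where A="space M"]) auto
  finally show ?thesis using Z_sq[of N] by simp
qed

lemma card_near:
  fixes n L N :: nat
  shows "card {n'\<in>{1..N}. (if n \<le> n' then n' - n else n - n') < L} \<le> 2 * L"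
proof -
  have "{n'\<in>{1..N}. (if n \<le> n' then n' - n else n - n') < L} \<subseteq> {n - L<..<n+L}"
    by auto
  then have "card {n'\<in>{1..N}. (if n \<le> n' then n' - n else n - n') < L} \<le> card {n - L<..<n+L}"
    by (intro card_mono) auto
  also have "\<dots> \<le> 2 * L" by simp
  finally show ?thesis .
qed

lemma var_bound:
  assumes rate: "\<And>j. 1 \<le> j \<Longrightarrow> rho j \<le> K * real j powr (-\<gamma>)"
    and K: "0 \<le> K" and \<gamma>: "0 < \<gamma>" and L: "1 \<le> L"
  shows "(\<Sum>n\<in>{1..N}. \<Sum>n'\<in>{1..N}. prob (G n \<inter> G n') - cc^2)
     \<le> real N * (2 * real L) + real N * (real N * (K * real L powr (-\<gamma>)))"
proof -
  define d where "d n n' = (if n \<le> n' then n' - n else n - n')" for n n' :: nat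
  have pt: "prob (G n \<inter> G n') - cc^2 \<le> (if d n n' < L then 1 else 0) + K * real L powr (-\<gamma>)" for n n'
  proof (cases "d n n' < L")
    case True
    have "0 \<le> K * real L powr (-\<gamma>)" using K by simp
    then show ?thesis using cov_G1[of n n'] True by (simp add: abs_le_iff)
  next
    case False
    then have "rho (d n n') \<le> K * real (d n n') powr (-\<gamma>)" using rate L by simp
    also have "\<dots> \<le> K * real L powr (-\<gamma>)"
      using False L \<gamma> K by (intro mult_left_mono powr_mono2') auto
    finally show ?thesis using cov_G2[of n n'] False unfolding d_def by (simp add: abs_le_iff)
  qed
  have row: "(\<Sum>n'\<in>{1..N}. prob (G n \<inter> G n') - cc^2) \<le> 2 * real L + real N * (K * real L powr (-\<gamma>))" for n
  proof -
    have "(\<Sum>n'\<in>{1..N}. prob (G n \<inter> G n') - cc^2) \<le> (\<Sum>n'\<in>{1..N}. (if d n n' < L then 1 else 0) + K * real L powr (-\<gamma>))"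
      by (intro sum_mono pt)
    also have "\<dots> = real (card {n'\<in>{1..N}. d n n' < L}) + real N * (K * real L powr (-\<gamma>))"
      by (simp add: sum.distrib sum.inter_filter[symmetric])
    also have "\<dots> \<le> 2 * real L + real N * (K * real L powr (-\<gamma>))"
      using card_near[of N n L] unfolding d_def by simp
    finally show ?thesis .
  qed
  have "(\<Sum>n\<in>{1..N}. \<Sum>n'\<in>{1..N}. prob (G n \<inter> G n') - cc^2) \<le> (\<Sum>n\<in>{1..N}. 2 * real L + real N * (K * real L powr (-\<gamma>)))"
    by (intro sum_mono row)
  also have "\<dots> = real N * (2 * real L) + real N * (real N * (K * real L powr (-\<gamma>)))"
    by (simp add: algebra_simps)
  finally show ?thesis .
qed

lemma AE_conv:
  assumes rate: "\<And>j. 1 \<le> j \<Longrightarrow> rho j \<le> K * real j powr (-\<gamma>)"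
    and K: "0 \<le> K" and \<gamma>: "0 < \<gamma>"
  shows "AE \<omega> in M. (\<lambda>n. Sc n \<omega> / real n) \<longlonglongrightarrow> cc"
proof -
  define a where "a = nat \<lceil>2 / \<gamma>\<rceil>"
  have a: "2 \<le> real a * \<gamma>"
  proof -
    have "2 / \<gamma> \<le> real a" unfolding a_def by linarith
    then show ?thesis using \<gamma> by (simp add: field_simps)
  qed
  define Mi where "Mi i = (i+1)^(a+2)" for i :: nat
  define Li where "Li i = (i+1)^a" for i :: nat
  define A where "A e i = {\<omega>\<in>space M. e * real (Mi i) \<le> \<bar>Z (Mi i) \<omega>\<bar>}" for e :: real and i
  have A_ev[measurable]: "A e i \<in> events" for e i unfolding A_def by measurable
  have pA: "prob (A e i) \<le> (2 + K) / e^2 * inverse (real (i+1)^2)" if e: "0 < e" for e i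
  proof -
    have Mpos: "0 < real (Mi i)" unfolding Mi_def by (simp only: of_nat_0_less_iff zero_less_power zero_less_Suc Suc_eq_plus1[symmetric])
    have MiE: "real (Mi i) = real (i+1)^(a+2)" by (simp only: Mi_def of_nat_power)
    have "prob (A e i) \<le> (\<Sum>n\<in>{1..Mi i}. \<Sum>n'\<in>{1..Mi i}. prob (G n \<inter> G n') - cc^2) / (e * real (Mi i))^2"
      unfolding A_def using e Mpos by (intro Z_markov) simp
    also have "(\<Sum>n\<in>{1..Mi i}. \<Sum>n'\<in>{1..Mi i}. prob (G n \<inter> G n') - cc^2) / (e * real (Mi i))^2 \<le> (2 + K) / e^2 * inverse (real (i+1)^2)"
      unfolding MiE
    proof (rule arith_bound[OF _ a K e])
      show "1 \<le> real (i+1)" by simp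
      have L1: "1 \<le> Li i" unfolding Li_def by simp
      show "(\<Sum>n\<in>{1..Mi i}. \<Sum>n'\<in>{1..Mi i}. prob (G n \<inter> G n') - cc^2)
        \<le> real (i+1)^(a+2) * (2 * real (i+1)^a) + real (i+1)^(a+2) * (real (i+1)^(a+2) * (K * (real (i+1)^a) powr (-\<gamma>)))"
        using var_bound[OF rate K \<gamma> L1, of "Mi i"] unfolding MiE unfolding Li_def by simp
    qed
    finally show ?thesis .
  qed
  have BC: "AE \<omega> in M. eventually (\<lambda>i. \<omega> \<in> space M - A e i) sequentially" if e: "0 < e" for e
  proof (rule borel_cantelli_AE1)
    show "A e i \<in> sets M" for i by simp
    show "emeasure M (A e i) < \<infinity>" for i by (simp add: less_top[symmetric])
    have s0: "summable (\<lambda>i. inverse (real i ^ 2))" by (rule inverse_power_summable) simp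
    have s1: "summable (\<lambda>i. inverse (real (i+1) ^ 2))"
      using summable_ignore_initial_segment[OF s0, of 1] by simp
    show "summable (\<lambda>i. measure M (A e i))"
      by (rule summable_comparison_test[OF _ summable_mult[OF s1, of "(2+K)/e^2"]])
         (use pA[OF e] in auto)
  qed
  have "AE \<omega> in M. \<forall>m::nat. eventually (\<lambda>i. \<omega> \<in> space M - A (1 / real (Suc m)) i) sequentially"
    unfolding AE_all_countable by (intro allI BC) simp
  then show ?thesis
  proof (rule AE_mp, intro AE_I2 impI)
    fix \<omega> assume \<omega>: "\<omega> \<in> space M" and ev: "\<forall>m::nat. eventually (\<lambda>i. \<omega> \<in> space M - A (1 / real (Suc m)) i) sequentially"
    have Sc0: "0 \<le> Sc n \<omega>" for n unfolding Sc_def by (auto intro: sum_nonneg)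
    have Scm: "Sc n \<omega> \<le> Sc (Suc n) \<omega>" for n unfolding Sc_def by simp
    have Mi_sm: "strict_mono Mi" unfolding Mi_def
      by (rule strict_monoI_Suc, intro power_strict_mono) auto
    have ratio: "(\<lambda>i. real (Mi (Suc i)) / real (Mi i)) \<longlonglongrightarrow> 1"
    proof -
      have "(\<lambda>i. real (Suc (Suc i)) / real (Suc i)) \<longlonglongrightarrow> 1"
        using LIMSEQ_Suc[OF LIMSEQ_Suc_n_over_n] by simp
      then have "(\<lambda>i. (real (Suc (Suc i)) / real (Suc i))^(a+2)) \<longlonglongrightarrow> 1^(a+2)"
        by (intro tendsto_power)
      moreover have "real (Mi (Suc i)) / real (Mi i) = (real (Suc (Suc i)) / real (Suc i))^(a+2)" for i
        by (simp only: Mi_def of_nat_power power_divide Suc_eq_plus1)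
      ultimately show ?thesis by simp
    qed
    have sub: "(\<lambda>i. Sc (Mi i) \<omega> / real (Mi i)) \<longlonglongrightarrow> cc"
    proof (rule tendsto_from_eps)
      fix m :: nat
      show "eventually (\<lambda>i. \<bar>Sc (Mi i) \<omega> / real (Mi i) - cc\<bar> < 1 / real (Suc m)) sequentially"
        using ev[rule_format, of m]
      proof (rule eventually_mono)
        fix i assume "\<omega> \<in> space M - A (1 / real (Suc m)) i"
        then have lt: "\<bar>Z (Mi i) \<omega>\<bar> < real (Mi i) / real (Suc m)" unfolding A_def using \<omega> by auto
        have Mpos: "0 < real (Mi i)" unfolding Mi_def by (simp only: of_nat_0_less_iff zero_less_power zero_less_Suc Suc_eq_plus1[symmetric])
        have "Sc (Mi i) \<omega> / real (Mi i) - cc = Z (Mi i) \<omega> / real (Mi i)"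
          unfolding Z_def using Mpos by (simp add: field_simps)
        then show "\<bar>Sc (Mi i) \<omega> / real (Mi i) - cc\<bar> < 1 / real (Suc m)"
          using lt Mpos by (simp add: field_simps)
      qed
    qed
    show "(\<lambda>n. Sc n \<omega> / real n) \<longlonglongrightarrow> cc"
      by (rule interp[OF Sc0 Scm Mi_sm _ ratio sub]) (simp add: Mi_def)
  qed
qed
end
end

lemma adm_tri:
  assumes adm: "admissible p u"
  shows "u k k \<noteq> 0 \<and> (\<forall>m>k. u k m = 0)"
proof (cases "k = 0")
  case True
  have u0: "u 0 = unit_vec 0" using adm unfolding admissible_def by blast
  show ?thesis using True u0 by (simp add: unit_vec_def)
next
  case False
  then have k: "1 \<le> k" by simp
  have fin: "finite {n. u k n \<noteq> 0}" using adm unfolding admissible_def c00_def by blast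
  have ne: "{n. u k n \<noteq> 0} \<noteq> {}"
  proof
    assume "{n. u k n \<noteq> 0} = {}"
    then have "u k = (\<lambda>_. 0)" by auto
    then show False using adm k unfolding admissible_def by blast
  qed
  have dk: "Max {n. u k n \<noteq> 0} = k" using adm k unfolding admissible_def deg_def by blast
  have "k \<in> {n. u k n \<noteq> 0}" using Max_in[OF fin ne] dk by simp
  moreover have "u k m = 0" if "m > k" for m
  proof (rule ccontr)
    assume "u k m \<noteq> 0"
    then have "m \<le> Max {n. u k n \<noteq> 0}" using Max_ge[OF fin] by simp
    then show False using dk that by simp
  qed
  ultimately show ?thesis by auto
qed

lemma expand:
  assumes adm: "admissible p u"
  shows "(\<forall>m>N. x m = 0) \<Longrightarrow> \<exists>c. \<forall>m. x m = (\<Sum>k\<le>N. c k * u k m)"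
proof (induction N arbitrary: x)
  case 0
  have u0: "u 0 = unit_vec 0" using adm by (simp add: admissible_def)
  have xm: "x m = x 0 * u 0 m" for m
  proof (cases "m = 0")
    case True then show ?thesis by (simp add: u0 unit_vec_def)
  next
    case False then have "x m = 0" using "0" by simp
    then show ?thesis using False by (simp add: u0 unit_vec_def)
  qed
  show ?case
  proof (intro exI allI)
    fix m show "x m = (\<Sum>k\<le>0. x 0 * u k m)" using xm[of m] by simp
  qed
next
  case (Suc N)
  define a where "a = x (Suc N) / u (Suc N) (Suc N)"
  have nz: "u (Suc N) (Suc N) \<noteq> 0" using adm_tri[OF adm] by blast
  define x' where "x' m = x m - a * u (Suc N) m" for m
  have x'0: "\<forall>m>N. x' m = 0"
  proof (intro allI impI)
    fix m assume m: "N < m"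
    show "x' m = 0"
    proof (cases "m = Suc N")
      case True
      have "a * u (Suc N) (Suc N) = x (Suc N)" unfolding a_def using nz by simp
      then show ?thesis unfolding x'_def True by simp
    next
      case False
      then have "m > Suc N" using m by simp
      then have "x m = 0" "u (Suc N) m = 0" using Suc.prems adm_tri[OF adm, of "Suc N"] by auto
      then show ?thesis unfolding x'_def by simp
    qed
  qed
  obtain c where c: "\<And>m. x' m = (\<Sum>k\<le>N. c k * u k m)" using Suc.IH[OF x'0] by blast
  define c' where "c' = c(Suc N := a)"
  have "x m = (\<Sum>k\<le>Suc N. c' k * u k m)" for m
  proof -
    have "(\<Sum>k\<le>N. c' k * u k m) = (\<Sum>k\<le>N. c k * u k m)"
      unfolding c'_def by (intro sum.cong) auto
    moreover have "(\<Sum>k\<le>Suc N. c' k * u k m) = (\<Sum>k\<le>N. c' k * u k m) + a * u (Suc N) m"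
      unfolding c'_def by (simp only: sum.atMost_Suc fun_upd_same)
    moreover have "x m = x' m + a * u (Suc N) m" unfolding x'_def by simp
    moreover have "c' (Suc N) = a" unfolding c'_def by simp
    ultimately show ?thesis using c[of m] by simp
  qed
  then show ?case by blast
qed

lemma h_expand:
  assumes adm: "admissible p u" and h: "c00 h"
  shows "\<exists>N c. (\<forall>k>N. c k = 0) \<and> (\<forall>n\<ge>N. \<forall>m. h m = (\<Sum>k\<le>n. c k * u k m))"
proof -
  define N where "N = (if {n. h n \<noteq> 0} = {} then 0 else Max {n. h n \<noteq> 0})"
  have fin: "finite {n. h n \<noteq> 0}" using h unfolding c00_def .
  have hN: "\<forall>m>N. h m = 0"
  proof (intro allI impI, rule ccontr)
    fix m assume m: "N < m" "h m \<noteq> 0"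
    then have "{n. h n \<noteq> 0} \<noteq> {}" by auto
    then have "m \<le> N" unfolding N_def using Max_ge[OF fin] m by auto
    then show False using m by simp
  qed
  obtain c where c: "\<forall>m. h m = (\<Sum>k\<le>N. c k * u k m)" using expand[OF adm hN] by blast
  define c' where "c' k = (if k \<le> N then c k else 0)" for k
  have "\<forall>n\<ge>N. \<forall>m. h m = (\<Sum>k\<le>n. c' k * u k m)"
  proof (intro allI impI)
    fix n m assume n: "N \<le> n"
    have "(\<Sum>k\<le>n. c' k * u k m) = (\<Sum>k\<le>N. c' k * u k m)"
      using n by (intro sum.mono_neutral_right) (auto simp: c'_def)
    also have "\<dots> = (\<Sum>k\<le>N. c k * u k m)" unfolding c'_def by simp
    finally show "h m = (\<Sum>k\<le>n. c' k * u k m)" using c by simp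
  qed
  moreover have "\<forall>k>N. c' k = 0" unfolding c'_def by simp
  ultimately show ?thesis by blast
qed

lemma Tn_bound:
  assumes p: "1 \<le> p" and adm: "admissible p u"
    and hc: "\<forall>m. h m = (\<Sum>k\<le>n. c k * u k m)"
    and w: "\<And>k. k \<le> n \<Longrightarrow> norm (x (k+n) - c k) \<le> w k"
  shows "lp_norm p (\<lambda>m. Tn u n x m - h m) \<le> (\<Sum>k\<le>n. w k * lp_norm p (u k))"
proof -
  have eq: "(\<lambda>m. Tn u n x m - h m) = (\<lambda>m. \<Sum>k\<in>{..n}. (x (k+n) - c k) * u k m)"
    unfolding Tn_def using hc by (simp add: sum_subtractf left_diff_distrib)
  have inl: "in_lp p (u k)" for k using adm lp_c00 unfolding admissible_def by blast
  have "lp_norm p (\<lambda>m. Tn u n x m - h m) \<le> (\<Sum>k\<le>n. norm (x (k+n) - c k) * lp_norm p (u k))"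
    unfolding eq using lp_sum[OF p inl, of "{..n}" "\<lambda>k. x (k+n) - c k"] by simp
  also have "\<dots> \<le> (\<Sum>k\<le>n. w k * lp_norm p (u k))"
    using w by (intro sum_mono mult_right_mono lp_norm_nonneg) auto
  finally show ?thesis .
qed

lemma tail_sum_le_total:
  fixes f :: "nat \<Rightarrow> real"
  assumes "summable f" "\<And>n. 0 \<le> f n"
  shows "(\<Sum>i. f (i+j)) \<le> (\<Sum>i. f i)"
  using suminf_split_initial_segment[OF assms(1), of j] assms(2) by (simp add: sum_nonneg)

lemma rate_lemma:
  fixes q :: "nat \<Rightarrow> real" and \<beta> K1 :: real
  assumes q0: "\<And>k. 0 \<le> q k" and \<beta>: "0 < \<beta>" and K1: "0 \<le> K1"
    and qb: "\<And>k. k1 \<le> k \<Longrightarrow> q k \<le> K1 * real k powr (-(1+\<beta>))"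
  shows "summable q \<and> (\<exists>K\<ge>0. \<forall>j\<ge>1. (\<Sum>i. q (i+j)) \<le> K * real j powr (-(\<beta>/2)))"
proof -
  define \<gamma> where "\<gamma> = \<beta>/2"
  have \<gamma>: "0 < \<gamma>" unfolding \<gamma>_def using \<beta> by simp
  have sp: "summable (\<lambda>k. real k powr (-(1+\<beta>)))" using \<beta> by (subst summable_real_powr_iff) simp
  have spg: "summable (\<lambda>k. real k powr (-(1+\<gamma>)))" using \<gamma> by (subst summable_real_powr_iff) simp
  have sq: "summable q"
    by (rule summable_comparison_test'[OF summable_mult[OF sp, of K1], of k1]) (use q0 qb in auto)
  define J where "J = max k1 1"
  define Z where "Z = (\<Sum>k. real k powr (-(1+\<gamma>)))"
  define Q0 where "Q0 = (\<Sum>k. q k)"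
  have Q0: "0 \<le> Q0" unfolding Q0_def using sq q0 by (simp add: suminf_nonneg)
  have Z0: "0 \<le> Z" unfolding Z_def using spg by (simp add: suminf_nonneg)
  define K where "K = K1 * Z + Q0 * real J powr \<gamma>"
  have K0: "0 \<le> K" unfolding K_def using K1 Z0 Q0 by simp
  have "\<forall>j\<ge>1. (\<Sum>i. q (i+j)) \<le> K * real j powr (-\<gamma>)"
  proof (intro allI impI)
    fix j :: nat assume j1: "1 \<le> j"
    have sqj: "summable (\<lambda>i. q (i+j))" using summable_ignore_initial_segment[OF sq] .
    show "(\<Sum>i. q (i+j)) \<le> K * real j powr (-\<gamma>)"
    proof (cases "J \<le> j")
      case True
      have pt: "q (i+j) \<le> K1 * real j powr (-\<gamma>) * real (i+j) powr (-(1+\<gamma>))" for i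
      proof -
        have "k1 \<le> i + j" using True unfolding J_def by simp
        then have "q (i+j) \<le> K1 * real (i+j) powr (-(1+\<beta>))" by (rule qb)
        also have "real (i+j) powr (-(1+\<beta>)) = real (i+j) powr (-\<gamma>) * real (i+j) powr (-(1+\<gamma>))"
        proof -
          have "-(1+\<beta>) = -\<gamma> + -(1+\<gamma>)" unfolding \<gamma>_def by simp
          then show ?thesis by (simp only: powr_add)
        qed
        also have "\<dots> \<le> real j powr (-\<gamma>) * real (i+j) powr (-(1+\<gamma>))"
          using j1 \<gamma> by (intro mult_right_mono powr_mono2') auto
        finally show ?thesis using K1 by (simp add: mult_left_mono mult.assoc)
      qed
      have spgj: "summable (\<lambda>i. real (i+j) powr (-(1+\<gamma>)))" using summable_ignore_initial_segment[OF spg] .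
      have "(\<Sum>i. q (i+j)) \<le> (\<Sum>i. K1 * real j powr (-\<gamma>) * real (i+j) powr (-(1+\<gamma>)))"
        by (intro suminf_le pt sqj summable_mult spgj)
      also have "\<dots> = K1 * real j powr (-\<gamma>) * (\<Sum>i. real (i+j) powr (-(1+\<gamma>)))"
        by (intro suminf_mult spgj)
      also have "\<dots> \<le> K1 * real j powr (-\<gamma>) * Z"
        unfolding Z_def using K1 by (intro mult_left_mono tail_sum_le_total spg) auto
      also have "\<dots> \<le> K * real j powr (-\<gamma>)"
        unfolding K_def using Q0 by (simp add: algebra_simps)
      finally show ?thesis .
    next
      case False
      have "(\<Sum>i. q (i+j)) \<le> Q0" unfolding Q0_def by (rule tail_sum_le_total[OF sq q0])
      also have "Q0 \<le> Q0 * (real J powr \<gamma> * real j powr (-\<gamma>))"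
      proof -
        have "real j powr \<gamma> \<le> real J powr \<gamma>" using False \<gamma> by (intro powr_mono2) auto
        then have "1 \<le> real J powr \<gamma> / real j powr \<gamma>" using j1 by simp
        then have "1 \<le> real J powr \<gamma> * real j powr (-\<gamma>)" by (simp add: powr_minus divide_inverse)
        then show ?thesis using Q0 by (metis mult.right_neutral mult_left_mono)
      qed
      also have "\<dots> \<le> K * real j powr (-\<gamma>)"
        unfolding K_def using K1 Z0 by (simp add: algebra_simps)
      finally show ?thesis .
    qed
  qed
  then show ?thesis using sq K0 unfolding \<gamma>_def by blast
qed

context iidseq
begin

lemma tail_bound:
  assumes "\<exists>\<beta>>0. Limsup at_top (\<lambda>r::real. ereal ((ln r) powr (1 + \<beta>) *
                  measure M {\<omega> \<in> space M. norm (X \<omega>) \<ge> r})) < \<infinity>"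
  obtains \<beta> K0 r0 where "0 < \<beta>" "0 \<le> K0" "1 < r0"
     "\<forall>r\<ge>r0. (ln r) powr (1 + \<beta>) * prob {\<omega> \<in> space M. r \<le> norm (X \<omega>)} \<le> K0"
proof -
  obtain \<beta> where \<beta>: "\<beta> > 0" and L: "Limsup at_top (\<lambda>r::real. ereal ((ln r) powr (1 + \<beta>) *
                  measure M {\<omega> \<in> space M. norm (X \<omega>) \<ge> r})) < \<infinity>" using assms by blast
  obtain n :: nat where n: "Limsup at_top (\<lambda>r::real. ereal ((ln r) powr (1 + \<beta>) *
                  measure M {\<omega> \<in> space M. norm (X \<omega>) \<ge> r})) < ereal (real n)"
    using L less_PInf_Ex_of_nat by auto
  have "eventually (\<lambda>r. ereal ((ln r) powr (1 + \<beta>) * measure M {\<omega> \<in> space M. norm (X \<omega>) \<ge> r}) < ereal (real n)) at_top"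
    by (rule Limsup_lessD[OF n])
  then obtain r1 where r1: "\<And>r. r \<ge> r1 \<Longrightarrow> (ln r) powr (1 + \<beta>) * measure M {\<omega> \<in> space M. norm (X \<omega>) \<ge> r} < real n"
    unfolding eventually_at_top_linorder by auto
  show ?thesis
  proof (rule that[of \<beta> "real n" "max r1 2"])
    show "\<forall>r\<ge>max r1 2. (ln r) powr (1 + \<beta>) * prob {\<omega> \<in> space M. r \<le> norm (X \<omega>)} \<le> real n"
      using r1 by (auto intro: less_imp_le)
  qed (use \<beta> in auto)
qed

lemma qbound:
  assumes \<beta>: "0 < \<beta>" and K0: "0 \<le> K0" and r0: "1 < r0"
    and T: "\<forall>r\<ge>r0. (ln r) powr (1 + \<beta>) * prob {\<omega> \<in> space M. r \<le> norm (X \<omega>)} \<le> K0"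
    and e: "0 < e" and s: "0 < s" "s < 1"
  shows "\<exists>K1 k1. 0 \<le> K1 \<and> (\<forall>k\<ge>k1. prob {\<omega> \<in> space M. e * (1/s)^k \<le> norm (X \<omega>)} \<le> K1 * real k powr (-(1+\<beta>)))"
proof -
  define lam where "lam = ln (1/s)"
  have lam: "0 < lam" unfolding lam_def using s by simp
  obtain k1 :: nat where k1: "2 * (\<bar>ln e\<bar> + ln r0) / lam + 1 < real k1" using reals_Archimedean2 by blast
  define K1 where "K1 = K0 * (lam/2) powr (-(1+\<beta>))"
  have K1: "0 \<le> K1" unfolding K1_def using K0 by simp
  have "\<forall>k\<ge>k1. prob {\<omega> \<in> space M. e * (1/s)^k \<le> norm (X \<omega>)} \<le> K1 * real k powr (-(1+\<beta>))"
  proof (intro allI impI)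
    fix k assume k: "k1 \<le> k"
    define w where "w = e * (1/s)^k"
    have wpos: "0 < w" unfolding w_def using e s by simp
    have lnw: "ln w = ln e + real k * lam" unfolding w_def lam_def using e s by (simp add: ln_mult ln_realpow)
    define t where "t = real k * lam"
    have lr0: "0 < ln r0" using r0 by simp
    have kk: "2 * (\<bar>ln e\<bar> + ln r0) / lam < real k" using k k1 by linarith
    then have "2 * (\<bar>ln e\<bar> + ln r0) < t" unfolding t_def using lam by (simp add: field_simps)
    then have h1: "\<bar>ln e\<bar> + ln r0 < t / 2" by argo
    have h2: "- \<bar>ln e\<bar> \<le> ln e" by simp
    have lnw2: "t / 2 + ln r0 \<le> ln w" unfolding lnw t_def[symmetric] using h1 h2 by argo
    have "0 \<le> t / 2" using h1 lr0 by argo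
    then have "ln r0 \<le> ln w" using lnw2 by argo
    then have wr0: "r0 \<le> w" using wpos r0 by simp
    have "0 \<le> 2 * (\<bar>ln e\<bar> + ln r0) / lam" using lr0 lam by simp
    then have kpos: "0 < real k" using kk by linarith
    have lnw2': "real k * lam / 2 + ln r0 \<le> ln w" using lnw2 unfolding t_def .
    have a: "0 < real k * lam / 2" using kpos lam by simp
    have b: "real k * lam / 2 \<le> ln w" using lnw2' lr0 by linarith
    have pb: "(real k * lam / 2) powr (1+\<beta>) \<le> (ln w) powr (1+\<beta>)" using a b \<beta> by (intro powr_mono2) auto
    have pa: "0 < (real k * lam / 2) powr (1+\<beta>)" using a by (simp only: powr_gt_zero)
    have Tw: "(ln w) powr (1 + \<beta>) * prob {\<omega> \<in> space M. w \<le> norm (X \<omega>)} \<le> K0" using T wr0 by blast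
    define P where "P = prob {\<omega> \<in> space M. w \<le> norm (X \<omega>)}"
    have P0: "0 \<le> P" unfolding P_def by simp
    have "P * (real k * lam / 2) powr (1+\<beta>) \<le> P * (ln w) powr (1+\<beta>)"
      by (rule mult_left_mono[OF pb P0])
    also have "\<dots> \<le> K0" using Tw unfolding P_def by (simp only: mult.commute)
    finally have "P * (real k * lam / 2) powr (1+\<beta>) \<le> K0" .
    then have "P \<le> K0 / (real k * lam / 2) powr (1+\<beta>)"
      using pa by (simp only: pos_le_divide_eq)
    also have "\<dots> = K1 * real k powr (-(1+\<beta>))"
    proof -
      have e1: "real k * lam / 2 = real k * (lam / 2)" by simp
      have "(real k * (lam / 2)) powr (1+\<beta>) = real k powr (1+\<beta>) * (lam/2) powr (1+\<beta>)"
        using kpos lam by (intro powr_mult; simp)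
      then have "(real k * lam / 2) powr (1+\<beta>) = real k powr (1+\<beta>) * (lam/2) powr (1+\<beta>)"
        by (simp only: e1)
      then show ?thesis unfolding K1_def powr_minus divide_inverse
        by (simp only: inverse_mult_distrib ac_simps)
    qed
    finally have "P \<le> K1 * real k powr (-(1+\<beta>))" .
    then have "prob {\<omega> \<in> space M. w \<le> norm (X \<omega>)} \<le> K1 * real k powr (-(1+\<beta>))" unfolding P_def .
    then show "prob {\<omega> \<in> space M. e * (1/s)^k \<le> norm (X \<omega>)} \<le> K1 * real k powr (-(1+\<beta>))"
      unfolding w_def .
  qed
  then show ?thesis using K1 by blast
qed

end

theorem theorem3p1:
  fixes p :: real and u :: "nat \<Rightarrow> nat \<Rightarrow> complex"
    and M :: "'a measure" and X :: "'a \<Rightarrow> complex" and Xs :: "nat \<Rightarrow> 'a \<Rightarrow> complex"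
  assumes p: "1 \<le> p"
    and adm: "admissible p u"
    and decay: "\<exists>C>0. \<exists>\<tau>. 0 < \<tau> \<and> \<tau> < 1 \<and> (\<forall>k. lp_norm p (u k) \<le> C * \<tau> ^ k)"
    and P: "prob_space M"
    and X_rv: "X \<in> borel_measurable M"
    and supp: "\<forall>U. open U \<and> U \<noteq> {} \<longrightarrow> measure M {\<omega> \<in> space M. X \<omega> \<in> U} > 0"
    and tail: "\<exists>\<beta>>0. Limsup at_top (\<lambda>r::real. ereal ((ln r) powr (1 + \<beta>) *
                  measure M {\<omega> \<in> space M. norm (X \<omega>) \<ge> r})) < \<infinity>"
    and Xs_rv: "\<forall>k. Xs k \<in> borel_measurable M"
    and Xs_indep: "prob_space.indep_vars M (\<lambda>_. borel) Xs UNIV"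
    and Xs_distr: "\<forall>k. distr M borel (Xs k) = distr M borel X"
  shows "(AE \<omega> in M. summable (\<lambda>k. norm (Xs k \<omega>) * lp_norm p (u k)) \<and>
                   series_vec u (\<lambda>k. Xs k \<omega>) \<in> Ep p u) \<and>
         (\<forall>h \<eta>. c00 h \<and> \<eta> > 0 \<longrightarrow>
            (AE \<omega> in M. \<exists>A. has_pos_density A \<and>
                (\<forall>n\<in>A. lp_norm p (\<lambda>m. Tn u n (\<lambda>k. Xs k \<omega>) m - h m) < \<eta>)))"
proof -
  interpret I: iidseq M X Xs
  proof (rule iidseq.intro[OF P], rule iidseq_axioms.intro)
    show "X \<in> borel_measurable M" by (rule X_rv)
    show "Xs k \<in> borel_measurable M" for k using Xs_rv by blast
    show "prob_space.indep_vars M (\<lambda>_. borel) Xs UNIV" by (rule Xs_indep)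
    show "distr M borel (Xs k) = distr M borel X" for k using Xs_distr by blast
  qed
  obtain C \<tau> where C: "C > 0" and \<tau>: "0 < \<tau>" "\<tau> < 1" and uC: "\<And>k. lp_norm p (u k) \<le> C * \<tau>^k"
    using decay by blast
  define s where "s = sqrt \<tau>"
  have s: "0 < s" "s < 1" using \<tau> unfolding s_def by auto
  have ss: "s * s = \<tau>" using \<tau> unfolding s_def by simp
  have sq: "(1/s)^k * \<tau>^k = s^k" for k
  proof -
    have "(1/s)^k * \<tau>^k = ((1/s) * \<tau>)^k" by (simp only: power_mult_distrib)
    also have "(1/s) * \<tau> = s" using s ss by (simp add: field_simps)
    finally show ?thesis .
  qed
  obtain \<beta> K0 r0 where \<beta>: "0 < \<beta>" and K0: "0 \<le> K0" and r0: "1 < r0"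
    and T: "\<forall>r\<ge>r0. (ln r) powr (1 + \<beta>) * measure M {\<omega> \<in> space M. r \<le> norm (X \<omega>)} \<le> K0"
    by (rule I.tail_bound[OF tail])
  have sgeo: "summable (\<lambda>k. C * s^k)" using s by (intro summable_mult summable_geometric) simp
  have part1: "AE \<omega> in M. summable (\<lambda>k. norm (Xs k \<omega>) * lp_norm p (u k)) \<and>
                   series_vec u (\<lambda>k. Xs k \<omega>) \<in> Ep p u"
  proof -
    obtain K1 k1 where K1: "0 \<le> K1"
      and qb: "\<forall>k\<ge>k1. measure M {\<omega> \<in> space M. 1 * (1/s)^k \<le> norm (X \<omega>)} \<le> K1 * real k powr (-(1+\<beta>))"
      using I.qbound[OF \<beta> K0 r0 T _ s(1) s(2), of 1] by auto
    define E where "E k = {\<omega>\<in>space M. (1/s)^k \<le> norm (Xs k \<omega>)}" for k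
    have E_ev: "E k \<in> sets M" for k unfolding E_def by measurable
    have Bb: "{z::complex. (1/s)^k \<le> norm z} \<in> sets borel" for k by measurable
    have pE: "measure M (E k) = measure M {\<omega> \<in> space M. 1 * (1/s)^k \<le> norm (X \<omega>)}" for k
      using I.probXs[OF Bb, of k k] I.probX[OF Bb, of k] unfolding E_def by simp
    have sE: "summable (\<lambda>k. measure M (E k))"
      using rate_lemma[of "\<lambda>k. measure M (E k)" \<beta> K1 k1] \<beta> K1 qb pE by auto
    have "AE \<omega> in M. eventually (\<lambda>k. \<omega> \<in> space M - E k) sequentially"
      by (rule borel_cantelli_AE1[OF E_ev _ sE]) (simp add: less_top[symmetric])
    then show ?thesis
    proof (rule eventually_mono)
      fix \<omega> assume ev: "eventually (\<lambda>k. \<omega> \<in> space M - E k) sequentially"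
      have "eventually (\<lambda>k. norm (norm (Xs k \<omega>) * lp_norm p (u k)) \<le> C * s^k) sequentially"
        using ev
      proof (rule eventually_mono)
        fix k assume "\<omega> \<in> space M - E k"
        then have x: "norm (Xs k \<omega>) \<le> (1/s)^k" unfolding E_def by auto
        have "norm (norm (Xs k \<omega>) * lp_norm p (u k)) = norm (Xs k \<omega>) * lp_norm p (u k)"
          using lp_norm_nonneg[of p "u k"] by simp
        also have "\<dots> \<le> (1/s)^k * (C * \<tau>^k)"
          using x uC[of k] lp_norm_nonneg[of p "u k"] s by (intro mult_mono) auto
        also have "\<dots> = C * s^k" using sq[of k] by (simp add: ac_simps)
        finally show "norm (norm (Xs k \<omega>) * lp_norm p (u k)) \<le> C * s^k" .
      qed
      then have sm: "summable (\<lambda>k. norm (Xs k \<omega>) * lp_norm p (u k))"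
        by (rule summable_comparison_test_ev[OF _ sgeo])
      moreover have "series_vec u (\<lambda>k. Xs k \<omega>) \<in> Ep p u" unfolding Ep_def using sm by blast
      ultimately show "summable (\<lambda>k. norm (Xs k \<omega>) * lp_norm p (u k)) \<and> series_vec u (\<lambda>k. Xs k \<omega>) \<in> Ep p u"
        by blast
    qed
  qed
  have part2: "\<forall>h \<eta>. c00 h \<and> \<eta> > 0 \<longrightarrow>
            (AE \<omega> in M. \<exists>A. has_pos_density A \<and>
                (\<forall>n\<in>A. lp_norm p (\<lambda>m. Tn u n (\<lambda>k. Xs k \<omega>) m - h m) < \<eta>))"
  proof (intro allI impI, elim conjE)
    fix h and \<eta> :: real assume h: "c00 h" and \<eta>: "\<eta> > 0"
    obtain N cf where cfN: "\<forall>k>N. cf k = 0" and hN: "\<forall>n\<ge>N. \<forall>m. h m = (\<Sum>k\<le>n. cf k * u k m)"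
      using h_expand[OF adm h] by blast
    define \<epsilon> where "\<epsilon> = \<eta> * (1 - s) / (2 * C)"
    have \<epsilon>: "0 < \<epsilon>" unfolding \<epsilon>_def using \<eta> s C by simp
    define w where "w k = \<epsilon> * (1/s)^k" for k
    have wpos: "0 < w k" for k unfolding w_def using \<epsilon> s by simp
    define B where "B k = ball (cf k) (w k)" for k
    have B_borel: "B k \<in> sets borel" for k unfolding B_def by simp
    have B_pos: "0 < measure I.mu (B k)" for k
    proof -
      have "open (B k)" "B k \<noteq> {}" unfolding B_def using wpos[of k] by auto
      then have "measure M {\<omega> \<in> space M. X \<omega> \<in> B k} > 0" using supp by blast
      then show ?thesis using I.probX[OF B_borel] by simp
    qed
    have qeq: "1 - measure I.mu (B k) = measure M {\<omega> \<in> space M. \<epsilon> * (1/s)^k \<le> norm (X \<omega>)}" if k: "N < k" for k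
    proof -
      interpret mu: prob_space I.mu by (rule I.prob_mu)
      have "1 - measure I.mu (B k) = measure I.mu (UNIV - B k)"
        using mu.prob_compl[of "B k"] B_borel by simp
      also have "UNIV - B k = {z. w k \<le> norm z}" unfolding B_def using cfN k by (auto simp: dist_norm)
      also have "measure I.mu {z. w k \<le> norm z} = measure M {\<omega> \<in> space M. w k \<le> norm (X \<omega>)}"
      proof -
        have Bw: "{z::complex. w k \<le> norm z} \<in> sets borel" by measurable
        show ?thesis using I.probX[OF Bw] by simp
      qed
      finally show ?thesis unfolding w_def .
    qed
    obtain K1 k1 where K1: "0 \<le> K1"
      and qb: "\<forall>k\<ge>k1. measure M {\<omega> \<in> space M. \<epsilon> * (1/s)^k \<le> norm (X \<omega>)} \<le> K1 * real k powr (-(1+\<beta>))"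
      using I.qbound[OF \<beta> K0 r0 T \<epsilon> s(1) s(2)] by auto
    have qb': "1 - measure I.mu (B k) \<le> K1 * real k powr (-(1+\<beta>))" if "max k1 (Suc N) \<le> k" for k
      using qb qeq that by auto
    have q0: "0 \<le> 1 - measure I.mu (B k)" for k using I.mu_le1 by simp
    obtain K where B_sum: "summable (\<lambda>k. 1 - measure I.mu (B k))" and K: "0 \<le> K"
      and rate0: "\<forall>j\<ge>1. (\<Sum>i. 1 - measure I.mu (B (i+j))) \<le> K * real j powr (-(\<beta>/2))"
      using rate_lemma[of "\<lambda>k. 1 - measure I.mu (B k)" \<beta> K1 "max k1 (Suc N)", OF q0 \<beta> K1 qb'] by auto
    have rate: "I.rho B j \<le> K * real j powr (-(\<beta>/2))" if "1 \<le> j" for j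
      using rate0 that by (simp add: I.rho_def[OF B_borel B_pos B_sum])
    have hb: "0 < \<beta> / 2" using \<beta> by simp
    have conv: "AE \<omega> in M. (\<lambda>n. I.Sc B n \<omega> / real n) \<longlonglongrightarrow> I.cc B"
      by (rule I.AE_conv[OF B_borel B_pos B_sum rate K hb])
    have ccpos: "0 < I.cc B" by (rule I.cc_pos[OF B_borel B_pos B_sum])
    have sumgeo: "(\<Sum>k\<le>n. s^k) \<le> 1 / (1 - s)" for n
    proof -
      have "(\<Sum>k<Suc n. s^k) \<le> (\<Sum>k. s^k)"
        using s by (intro sum_le_suminf summable_geometric) auto
      then show ?thesis using suminf_geometric[of s] s by (simp add: lessThan_Suc_atMost)
    qed
    show "AE \<omega> in M. \<exists>A. has_pos_density A \<and>
                (\<forall>n\<in>A. lp_norm p (\<lambda>m. Tn u n (\<lambda>k. Xs k \<omega>) m - h m) < \<eta>)"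
      using conv
    proof (rule eventually_mono)
      fix \<omega> assume lim: "(\<lambda>n. I.Sc B n \<omega> / real n) \<longlonglongrightarrow> I.cc B"
      define A where "A = {n. N \<le> n \<and> \<omega> \<in> I.G B n}"
      have Sc_card: "I.Sc B n \<omega> = real (card {k\<in>{1..n}. \<omega> \<in> I.G B k})" for n
      proof -
        have "I.Sc B n \<omega> = (\<Sum>k\<in>{1..n}. if \<omega> \<in> I.G B k then 1 else 0)"
          unfolding I.Sc_def[OF B_borel B_pos B_sum] by (intro sum.cong) (auto simp: indicator_def)
        also have "\<dots> = (\<Sum>k\<in>{k\<in>{1..n}. \<omega> \<in> I.G B k}. 1)"
          by (rule sum.inter_filter[symmetric]) simp
        also have "\<dots> = real (card {k\<in>{1..n}. \<omega> \<in> I.G B k})" by simp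
        finally show ?thesis .
      qed
      have up: "real (card (A \<inter> {1..n})) \<le> I.Sc B n \<omega>" for n
      proof -
        have "A \<inter> {1..n} \<subseteq> {k\<in>{1..n}. \<omega> \<in> I.G B k}" unfolding A_def by auto
        then have "card (A \<inter> {1..n}) \<le> card {k\<in>{1..n}. \<omega> \<in> I.G B k}" by (intro card_mono) auto
        then show ?thesis unfolding Sc_card by simp
      qed
      have lo: "I.Sc B n \<omega> - real N \<le> real (card (A \<inter> {1..n}))" for n
      proof -
        have "{k\<in>{1..n}. \<omega> \<in> I.G B k} \<subseteq> (A \<inter> {1..n}) \<union> {..<N}" unfolding A_def by auto
        then have "card {k\<in>{1..n}. \<omega> \<in> I.G B k} \<le> card ((A \<inter> {1..n}) \<union> {..<N})" by (intro card_mono) auto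
        also have "\<dots> \<le> card (A \<inter> {1..n}) + card {..<N}" by (rule card_Un_le)
        finally show ?thesis unfolding Sc_card by simp
      qed
      have dens: "(\<lambda>n. real (card (A \<inter> {1..n})) / real n) \<longlonglongrightarrow> I.cc B"
      proof (rule tendsto_sandwich[of "\<lambda>n. I.Sc B n \<omega> / real n - real N / real n" _ _ "\<lambda>n. I.Sc B n \<omega> / real n"])
        show "eventually (\<lambda>n. I.Sc B n \<omega> / real n - real N / real n \<le> real (card (A \<inter> {1..n})) / real n) sequentially"
          using lo by (intro always_eventually allI) (simp add: diff_divide_distrib[symmetric] divide_right_mono)
        show "eventually (\<lambda>n. real (card (A \<inter> {1..n})) / real n \<le> I.Sc B n \<omega> / real n) sequentially"
          using up by (intro always_eventually allI) (simp add: divide_right_mono)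
        show "(\<lambda>n. I.Sc B n \<omega> / real n - real N / real n) \<longlonglongrightarrow> I.cc B"
          using tendsto_diff[OF lim lim_const_over_n[of "real N"]] by simp
      qed (rule lim)
      have "has_pos_density A" unfolding has_pos_density_def using dens ccpos by blast
      moreover have "lp_norm p (\<lambda>m. Tn u n (\<lambda>k. Xs k \<omega>) m - h m) < \<eta>" if n: "n \<in> A" for n
      proof -
        have nN: "N \<le> n" and G: "\<omega> \<in> I.G B n" using n unfolding A_def by auto
        have hn: "\<forall>m. h m = (\<Sum>k\<le>n. cf k * u k m)" using hN nN by blast
        have wk: "norm (Xs (k+n) \<omega> - cf k) \<le> w k" if "k \<le> n" for k
        proof -
          have "Xs (k+n) \<omega> \<in> B k" using G unfolding I.G_def[OF B_borel B_pos B_sum] by blast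
          then show ?thesis unfolding B_def by (simp add: dist_norm norm_minus_commute)
        qed
        have "lp_norm p (\<lambda>m. Tn u n (\<lambda>k. Xs k \<omega>) m - h m) \<le> (\<Sum>k\<le>n. w k * lp_norm p (u k))"
          by (rule Tn_bound[OF p adm hn]) (use wk in simp)
        also have "\<dots> \<le> (\<Sum>k\<le>n. \<epsilon> * C * s^k)"
        proof (rule sum_mono)
          fix k
          have "w k * lp_norm p (u k) \<le> w k * (C * \<tau>^k)" using uC[of k] wpos[of k] by (intro mult_left_mono) auto
          also have "\<dots> = \<epsilon> * C * ((1/s)^k * \<tau>^k)" unfolding w_def by (simp add: ac_simps)
          also have "\<dots> = \<epsilon> * C * s^k" unfolding sq ..
          finally show "w k * lp_norm p (u k) \<le> \<epsilon> * C * s^k" .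
        qed
        also have "\<dots> = \<epsilon> * C * (\<Sum>k\<le>n. s^k)" by (simp add: sum_distrib_left)
        also have "\<dots> \<le> \<epsilon> * C * (1 / (1 - s))" using \<epsilon> C sumgeo[of n] by (intro mult_left_mono) auto
        also have "\<dots> = \<eta> / 2" unfolding \<epsilon>_def using s C by (simp add: field_simps)
        also have "\<dots> < \<eta>" using \<eta> by simp
        finally show ?thesis .
      qed
      ultimately show "\<exists>A. has_pos_density A \<and> (\<forall>n\<in>A. lp_norm p (\<lambda>m. Tn u n (\<lambda>k. Xs k \<omega>) m - h m) < \<eta>)"
        by blast
    qed
  qed
  show ?thesis using part1 part2 by blast
qed

end
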